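(* In the setting below, let $\Lambda\subset\operatorname{Char}P$ be a conic Lagrangian submanifold and let $a\in S^{\mu+1}(\Lambda,(\Omega^{1/2}_\Lambda)^3)$ with $p_2a=0$. Then $\mathcal T_{P,H_q}a=\mathcal L_{H_q}a-(H_q\pi)a$ on $\Lambda$.
   Context: $\rho,p:\mathbb R^3\to\mathbb R$, $H:\mathbb R^3\to\mathbb R^3$ are smooth, time-independent, $\rho>0$, $\gamma$ constant, with $\nabla p+H\times\operatorname{curl}H=0$; $c^2=\gamma p/\rho>0$, $0<|H|^2\ne\rho c^2$, and only points with $\xi\cdot H\ne0$, $\xi\times H\ne0$ are considered. $X=\mathbb R_t\times\mathbb R^3_x$ and $P$ is the $3\times3$ operator $P\beta=-\rho\partial_t^2\beta+\gamma\nabla(p\operatorname{div}\beta)+\nabla(\beta\cdot\nabla p)+(\nabla\times(\nabla\times(\beta\times H)))\times H+(\nabla\times H)\times(\nabla\times(\beta\times H))$, with full symbol $p_2+p_1+p_0$ (convention $\partial\mapsto i\xi$, $p_j$ homogeneous of degree $j$), $p_2=(\rho\tau^2-(H\cdot\xi)^2)\operatorname{Id}_3-(\gamma p+|H|^2)\xi\otimes\xi+(H\cdot\xi)(\xi\otimes H+H\otimes\xi)$, and subprincipal symbol $p^s=p_1-\frac1{2i}\sum_j\partial_{x_j}\partial_{\xi_j}p_2$. Let $q_1=\rho\tau^2-(H\cdot\xi)^2$, $q_2=\rho(\tau^2-c_s^2)$, $q_3=\rho(\tau^2-c_f^2)$, $c_{f,s}^2=\tfrac12\big((c^2+h^2)|\xi|^2\pm\sqrt{(c^2-h^2)^2|\xi|^4+4b^2c^2|\xi|^2}\big)$,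 $h^2=|H|^2/\rho$, $b^2=|\xi\times H|^2/\rho$; $\operatorname{Char}P=\{q_1q_2q_3=0\}$. Let $w^2=|H|^2\xi\otimes\xi+|\xi|^2H\otimes H-(H\cdot\xi)(H\otimes\xi+\xi\otimes H)$, $\pi_1=\operatorname{Id}_3+\frac{w^2}{(H\cdot\xi)^2-|H|^2|\xi|^2}$, $\pi_2=\frac{1}{\rho c_s^2-\rho c_f^2}\Big((\gamma p+|H|^2)\xi\otimes\xi-(H\cdot\xi)(\xi\otimes H+H\otimes\xi)+\frac{(H\cdot\xi)^2w^2}{\rho c_s^2-(H\cdot\xi)^2}\Big)$, $\pi_3$ the same with $s$ and $f$ interchanged. With $\Gamma_j$ pairwise disjoint conic neighborhoods of $\{q_j=0\}$, on $\Gamma_j$ set $q=q_j$, $\pi=\pi_j$, $\tilde p_2=\pi_j+\sum_{k\neq j}\frac{q_j}{q_k}\pi_k$. $H_q$ is the Hamilton field of $q$, $H_q\pi$ is $H_q$ applied entrywise to $\pi$, $\{\cdot,\cdot\}$ is the Poisson bracket ($\{\tilde p_2,p_2\}=\sum_j\partial_{\xi_j}\tilde p_2\partial_{x_j}p_2-\partial_{x_j}\tilde p_2\partial_{\xi_j}p_2$, matrix products), $\Omega^{1/2}_\Lambda$ is the half-density bundle of $\Lambda$, $S^{\mu+1}(\Lambda,(\Omega^{1/2}_\Lambda)^3)$ the symbol space of the Lagrangian distributions $I^\mu(X,\Lambda;(\Omega_X^{1/2})^3)$, $\mathcal L_{H_q}$ the Lie derivative along $H_q$, and $\mathcal T_{P,H_q}a=\mathcal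 L_{H_q}a+\frac12\{\tilde p_2,p_2\}a+i\tilde p_2p^sa$. *)

theory Defs
  imports "HOL-Analysis.Analysis"
begin

type_synonym pt = "real \<times> (real^3) \<times> real \<times> (real^3)"
  \<comment> \<open>a point (t, x, tau, xi) of the cotangent bundle of X = R_t x R^3_x\<close>

definition dir_deriv :: "('a::real_normed_vector \<Rightarrow> 'b::real_normed_vector) \<Rightarrow> 'a \<Rightarrow> 'a \<Rightarrow> 'b" where
  "dir_deriv f v z = vector_derivative (\<lambda>s. f (z + s *\<^sub>R v)) (at 0)"

fun iter_dd :: "('a::real_normed_vector) list \<Rightarrow> ('a \<Rightarrow> 'b::real_normed_vector) \<Rightarrow> 'a \<Rightarrow> 'b" where
  "iter_dd [] f = f"
| "iter_dd (v # vs) f = (\<lambda>z. dir_deriv (iter_dd vs f) v z)"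

definition smooth_on :: "('a::euclidean_space) set \<Rightarrow> ('a \<Rightarrow> 'b::real_normed_vector) \<Rightarrow> bool" where
  "smooth_on S f \<longleftrightarrow> (\<forall>vs. set vs \<subseteq> Basis \<longrightarrow> (\<forall>x\<in>S. iter_dd vs f differentiable (at x)))"

definition dT :: "(pt \<Rightarrow> 'b::real_normed_vector) \<Rightarrow> pt \<Rightarrow> 'b" where
  "dT f = dir_deriv f (1, 0, 0, 0)"
definition dX :: "(pt \<Rightarrow> 'b::real_normed_vector) \<Rightarrow> 3 \<Rightarrow> pt \<Rightarrow> 'b" where
  "dX f j = dir_deriv f (0, axis j 1, 0, 0)"
definition dTau :: "(pt \<Rightarrow> 'b::real_normed_vector) \<Rightarrow> pt \<Rightarrow> 'b" where
  "dTau f = dir_deriv f (0, 0, 1, 0)"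
definition dXi :: "(pt \<Rightarrow> 'b::real_normed_vector) \<Rightarrow> 3 \<Rightarrow> pt \<Rightarrow> 'b" where
  "dXi f j = dir_deriv f (0, 0, 0, axis j 1)"

definition poisson :: "(pt \<Rightarrow> real^3^3) \<Rightarrow> (pt \<Rightarrow> real^3^3) \<Rightarrow> pt \<Rightarrow> real^3^3" where
  "poisson A B z = (\<Sum>j\<in>UNIV. dXi A j z ** dX B j z - dX A j z ** dXi B j z)
      + (dTau A z ** dT B z - dT A z ** dTau B z)"

definition hamil :: "(pt \<Rightarrow> real) \<Rightarrow> (pt \<Rightarrow> real^3^3) \<Rightarrow> pt \<Rightarrow> real^3^3" where
  "hamil q A z = (\<Sum>j\<in>UNIV. dXi q j z *\<^sub>R dX A j z - dX q j z *\<^sub>R dXi A j z)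
      + (dTau q z *\<^sub>R dT A z - dT q z *\<^sub>R dTau A z)"

definition symp :: "pt \<Rightarrow> pt \<Rightarrow> real" where
  "symp u v = (case u of (t, x, \<tau>, \<xi>) \<Rightarrow> case v of (t', x', \<tau>', \<xi>') \<Rightarrow>
      \<tau> * t' - t * \<tau>' + \<xi> \<bullet> x' - x \<bullet> \<xi>')"

definition lagrangian_submanifold :: "pt set \<Rightarrow> bool" where
  "lagrangian_submanifold L \<longleftrightarrow>
    (\<forall>z\<in>L. \<exists>U (V :: (real^4) set) \<phi>. open U \<and> z \<in> U \<and> open V \<and> smooth_on V \<phi> \<and>
       inj_on \<phi> V \<and> \<phi> ` V = L \<inter> U \<and> continuous_on (L \<inter> U) (inv_into V \<phi>) \<and>
       (\<forall>u\<in>V. inj (frechet_derivative \<phi> (at u)) \<and>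
          (\<forall>a b. symp (frechet_derivative \<phi> (at u) a) (frechet_derivative \<phi> (at u) b) = 0)))"

definition conic_set :: "pt set \<Rightarrow> bool" where
  "conic_set S \<longleftrightarrow> (\<forall>t x \<tau> \<xi> s. (t, x, \<tau>, \<xi>) \<in> S \<longrightarrow> s > 0 \<longrightarrow> (t, x, s * \<tau>, s *\<^sub>R \<xi>) \<in> S)"

definition cvec :: "real^3 \<Rightarrow> complex^3" where
  "cvec v = (\<chi> i. complex_of_real (v $ i))"
definition cmat :: "real^3^3 \<Rightarrow> complex^3^3" where
  "cmat M = (\<chi> i j. complex_of_real (M $ i $ j))"
definition cscale :: "complex \<Rightarrow> complex^3^3 \<Rightarrow> complex^3^3" where
  "cscale c M = (\<chi> i j. c * M $ i $ j)"
definition tens :: "real^3 \<Rightarrow> real^3 \<Rightarrow> real^3^3" where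
  "tens u v = (\<chi> i j. u $ i * v $ j)"
definition ccross :: "complex^3 \<Rightarrow> complex^3 \<Rightarrow> complex^3" where
  "ccross u v = vector [u$2 * v$3 - u$3 * v$2, u$3 * v$1 - u$1 * v$3, u$1 * v$2 - u$2 * v$1]"
definition cdot :: "complex^3 \<Rightarrow> complex^3 \<Rightarrow> complex" where
  "cdot u v = (\<Sum>i\<in>UNIV. u $ i * v $ i)"

definition pd3 :: "(real^3 \<Rightarrow> 'b::real_normed_vector) \<Rightarrow> 3 \<Rightarrow> real^3 \<Rightarrow> 'b" where
  "pd3 f j = dir_deriv f (axis j 1)"
definition grad3 :: "(real^3 \<Rightarrow> real) \<Rightarrow> real^3 \<Rightarrow> real^3" where
  "grad3 f x = vector [pd3 f 1 x, pd3 f 2 x, pd3 f 3 x]"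
definition curl3 :: "(real^3 \<Rightarrow> real^3) \<Rightarrow> real^3 \<Rightarrow> real^3" where
  "curl3 F x = vector [pd3 F 2 x $ 3 - pd3 F 3 x $ 2, pd3 F 3 x $ 1 - pd3 F 1 x $ 3,
                       pd3 F 1 x $ 2 - pd3 F 2 x $ 1]"

definition dtm :: "(real \<times> (real^3) \<Rightarrow> 'b::real_normed_vector) \<Rightarrow> real \<times> (real^3) \<Rightarrow> 'b" where
  "dtm f = dir_deriv f (1, 0)"
definition dsp :: "(real \<times> (real^3) \<Rightarrow> 'b::real_normed_vector) \<Rightarrow> 3 \<Rightarrow> real \<times> (real^3) \<Rightarrow> 'b" where
  "dsp f j = dir_deriv f (0, axis j 1)"
definition Xgrad :: "(real \<times> (real^3) \<Rightarrow> complex) \<Rightarrow> real \<times> (real^3) \<Rightarrow> complex^3" where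
  "Xgrad g w = vector [dsp g 1 w, dsp g 2 w, dsp g 3 w]"
definition Xdiv :: "(real \<times> (real^3) \<Rightarrow> complex^3) \<Rightarrow> real \<times> (real^3) \<Rightarrow> complex" where
  "Xdiv F w = dsp F 1 w $ 1 + dsp F 2 w $ 2 + dsp F 3 w $ 3"
definition Xcurl :: "(real \<times> (real^3) \<Rightarrow> complex^3) \<Rightarrow> real \<times> (real^3) \<Rightarrow> complex^3" where
  "Xcurl F w = vector [dsp F 2 w $ 3 - dsp F 3 w $ 2, dsp F 3 w $ 1 - dsp F 1 w $ 3,
                       dsp F 1 w $ 2 - dsp F 2 w $ 1]"

definition Pop :: "(real^3 \<Rightarrow> real) \<Rightarrow> (real^3 \<Rightarrow> real) \<Rightarrow> (real^3 \<Rightarrow> real^3) \<Rightarrow> real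
    \<Rightarrow> (real \<times> (real^3) \<Rightarrow> complex^3) \<Rightarrow> real \<times> (real^3) \<Rightarrow> complex^3" where
  "Pop rho pr H gam \<beta> w =
     - (complex_of_real (rho (snd w)) *s dtm (dtm \<beta>) w)
     + complex_of_real gam *s Xgrad (\<lambda>y. complex_of_real (pr (snd y)) * Xdiv \<beta> y) w
     + Xgrad (\<lambda>y. cdot (\<beta> y) (cvec (grad3 pr (snd y)))) w
     + ccross (Xcurl (Xcurl (\<lambda>y. ccross (\<beta> y) (cvec (H (snd y)))))  w) (cvec (H (snd w)))
     + ccross (Xcurl (\<lambda>y. cvec (H (snd y))) w) (Xcurl (\<lambda>y. ccross (\<beta> y) (cvec (H (snd y)))) w)"

text \<open>Full symbol (convention d \<mapsto> i xi): e^{-i(t tau + x.xi)} P(e^{i(t tau + x.xi)} e_k), column k.\<close>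
definition full_symbol :: "(real^3 \<Rightarrow> real) \<Rightarrow> (real^3 \<Rightarrow> real) \<Rightarrow> (real^3 \<Rightarrow> real^3) \<Rightarrow> real
    \<Rightarrow> pt \<Rightarrow> complex^3^3" where
  "full_symbol rho pr H gam z = (case z of (t, x, \<tau>, \<xi>) \<Rightarrow>
     (\<chi> i k. (exp (- \<i> * complex_of_real (t * \<tau> + x \<bullet> \<xi>)) *s
        Pop rho pr H gam (\<lambda>y. exp (\<i> * complex_of_real (fst y * \<tau> + snd y \<bullet> \<xi>)) *s cvec (axis k 1))
            (t, x)) $ i))"

definition p2 :: "(real^3 \<Rightarrow> real) \<Rightarrow> (real^3 \<Rightarrow> real) \<Rightarrow> (real^3 \<Rightarrow> real^3) \<Rightarrow> real \<Rightarrow> pt \<Rightarrow> real^3^3" where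
  "p2 rho pr H gam z = (case z of (t, x, \<tau>, \<xi>) \<Rightarrow>
     (rho x * \<tau>\<^sup>2 - (H x \<bullet> \<xi>)\<^sup>2) *\<^sub>R mat 1 - (gam * pr x + (norm (H x))\<^sup>2) *\<^sub>R tens \<xi> \<xi>
     + (H x \<bullet> \<xi>) *\<^sub>R (tens \<xi> (H x) + tens (H x) \<xi>))"

definition subprincipal :: "(real^3 \<Rightarrow> real) \<Rightarrow> (real^3 \<Rightarrow> real) \<Rightarrow> (real^3 \<Rightarrow> real^3) \<Rightarrow> real
    \<Rightarrow> (pt \<Rightarrow> complex^3^3) \<Rightarrow> pt \<Rightarrow> complex^3^3" where
  "subprincipal rho pr H gam p1 z = p1 z
     - cscale (1 / (2 * \<i>)) (cmat (\<Sum>j\<in>UNIV. dX (\<lambda>w. dXi (p2 rho pr H gam) j w) j z))"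

definition csq :: "(real^3 \<Rightarrow> real) \<Rightarrow> (real^3 \<Rightarrow> real) \<Rightarrow> real \<Rightarrow> real^3 \<Rightarrow> real" where
  "csq rho pr gam x = gam * pr x / rho x"

definition fast_slow :: "bool \<Rightarrow> (real^3 \<Rightarrow> real) \<Rightarrow> (real^3 \<Rightarrow> real) \<Rightarrow> (real^3 \<Rightarrow> real^3) \<Rightarrow> real
    \<Rightarrow> real^3 \<Rightarrow> real^3 \<Rightarrow> real" where
  "fast_slow fast rho pr H gam x \<xi> =
     (let c2 = csq rho pr gam x; h2 = (norm (H x))\<^sup>2 / rho x;
          b2 = (norm (cross3 \<xi> (H x)))\<^sup>2 / rho x; n2 = (norm \<xi>)\<^sup>2;
          s = sqrt ((c2 - h2)\<^sup>2 * n2\<^sup>2 + 4 * b2 * c2 * n2)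
      in (1/2) * ((c2 + h2) * n2 + (if fast then s else - s)))"

abbreviation "cf2 \<equiv> fast_slow True"
abbreviation "cs2 \<equiv> fast_slow False"

definition qq :: "(real^3 \<Rightarrow> real) \<Rightarrow> (real^3 \<Rightarrow> real) \<Rightarrow> (real^3 \<Rightarrow> real^3) \<Rightarrow> real \<Rightarrow> nat \<Rightarrow> pt \<Rightarrow> real" where
  "qq rho pr H gam j z = (case z of (t, x, \<tau>, \<xi>) \<Rightarrow>
     (if j = 1 then rho x * \<tau>\<^sup>2 - (H x \<bullet> \<xi>)\<^sup>2
      else if j = 2 then rho x * (\<tau>\<^sup>2 - cs2 rho pr H gam x \<xi>)
      else rho x * (\<tau>\<^sup>2 - cf2 rho pr H gam x \<xi>)))"

definition CharP :: "(real^3 \<Rightarrow> real) \<Rightarrow> (real^3 \<Rightarrow> real) \<Rightarrow> (real^3 \<Rightarrow> real^3) \<Rightarrow> real \<Rightarrow> pt set" where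
  "CharP rho pr H gam = {z. qq rho pr H gam 1 z * qq rho pr H gam 2 z * qq rho pr H gam 3 z = 0}"

definition w2 :: "(real^3 \<Rightarrow> real^3) \<Rightarrow> real^3 \<Rightarrow> real^3 \<Rightarrow> real^3^3" where
  "w2 H x \<xi> = (norm (H x))\<^sup>2 *\<^sub>R tens \<xi> \<xi> + (norm \<xi>)\<^sup>2 *\<^sub>R tens (H x) (H x)
     - (H x \<bullet> \<xi>) *\<^sub>R (tens (H x) \<xi> + tens \<xi> (H x))"

definition ppi :: "(real^3 \<Rightarrow> real) \<Rightarrow> (real^3 \<Rightarrow> real) \<Rightarrow> (real^3 \<Rightarrow> real^3) \<Rightarrow> real \<Rightarrow> nat \<Rightarrow> pt \<Rightarrow> real^3^3" where
  "ppi rho pr H gam j z = (case z of (t, x, \<tau>, \<xi>) \<Rightarrow>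
     (if j = 1 then mat 1 + (1 / ((H x \<bullet> \<xi>)\<^sup>2 - (norm (H x))\<^sup>2 * (norm \<xi>)\<^sup>2)) *\<^sub>R w2 H x \<xi>
      else let cs = rho x * cs2 rho pr H gam x \<xi>; cf = rho x * cf2 rho pr H gam x \<xi>;
               base = (gam * pr x + (norm (H x))\<^sup>2) *\<^sub>R tens \<xi> \<xi>
                      - (H x \<bullet> \<xi>) *\<^sub>R (tens \<xi> (H x) + tens (H x) \<xi>)
           in if j = 2 then (1 / (cs - cf)) *\<^sub>R (base + ((H x \<bullet> \<xi>)\<^sup>2 / (cs - (H x \<bullet> \<xi>)\<^sup>2)) *\<^sub>R w2 H x \<xi>)
              else (1 / (cf - cs)) *\<^sub>R (base + ((H x \<bullet> \<xi>)\<^sup>2 / (cf - (H x \<bullet> \<xi>)\<^sup>2)) *\<^sub>R w2 H x \<xi>)))"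

definition ptil :: "(real^3 \<Rightarrow> real) \<Rightarrow> (real^3 \<Rightarrow> real) \<Rightarrow> (real^3 \<Rightarrow> real^3) \<Rightarrow> real \<Rightarrow> nat \<Rightarrow> pt \<Rightarrow> real^3^3" where
  "ptil rho pr H gam j z = ppi rho pr H gam j z
     + (\<Sum>k\<in>{1,2,3} - {j}. (qq rho pr H gam j z / qq rho pr H gam k z) *\<^sub>R ppi rho pr H gam k z)"

definition admissible :: "(real^3 \<Rightarrow> real^3) \<Rightarrow> pt \<Rightarrow> bool" where
  "admissible H z = (case z of (t, x, \<tau>, \<xi>) \<Rightarrow> \<xi> \<bullet> H x \<noteq> 0 \<and> cross3 \<xi> (H x) \<noteq> 0)"

text \<open>The transport operator T_{P,H_q} a = L_{H_q} a + 1/2 {tilde p_2, p_2} a + i tilde p_2 p^s a,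
  with the symbols in a trivialisation of the half-density bundle; La is the value of L_{H_q} a.\<close>
definition transportT :: "(real^3 \<Rightarrow> real) \<Rightarrow> (real^3 \<Rightarrow> real) \<Rightarrow> (real^3 \<Rightarrow> real^3) \<Rightarrow> real
    \<Rightarrow> (pt \<Rightarrow> complex^3^3) \<Rightarrow> nat \<Rightarrow> (pt \<Rightarrow> complex^3) \<Rightarrow> (pt \<Rightarrow> complex^3) \<Rightarrow> pt \<Rightarrow> complex^3" where
  "transportT rho pr H gam p1 j La a z =
     La z + cmat ((1/2) *\<^sub>R poisson (ptil rho pr H gam j) (p2 rho pr H gam) z) *v a z
     + \<i> *s ((cmat (ptil rho pr H gam j z) ** subprincipal rho pr H gam p1 z) *v a z)"

end

theory Submission
  imports Defs
begin


section \<open>tensor algebra\<close>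

lemma tens_mult: "tens a b ** tens c d = (b \<bullet> c) *\<^sub>R tens a d"
  by (simp add: tens_def matrix_matrix_mult_def vec_eq_iff inner_vec_def sum_distrib_left sum_distrib_right algebra_simps)

lemma tens_mulv: "tens a b *v v = (b \<bullet> v) *\<^sub>R a"
  by (simp add: tens_def matrix_vector_mult_def vec_eq_iff inner_vec_def sum_distrib_left algebra_simps)

lemma mult_tens: "M ** tens a b = tens (M *v a) b"
  by (simp add: tens_def matrix_matrix_mult_def matrix_vector_mult_def vec_eq_iff sum_distrib_left sum_distrib_right mult_ac)

lemma transpose_tens: "transpose (tens a b) = tens b a"
  by (simp add: tens_def transpose_def vec_eq_iff)

lemma tens_add_left: "tens (a + b) c = tens a c + tens b c"
  and tens_add_right: "tens a (b + c) = tens a b + tens a c"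
  and tens_diff_left: "tens (a - b) c = tens a c - tens b c"
  and tens_diff_right: "tens a (b - c) = tens a b - tens a c"
  and tens_scale_left: "tens (r *\<^sub>R a) c = r *\<^sub>R tens a c"
  and tens_scale_right: "tens a (r *\<^sub>R c) = r *\<^sub>R tens a c"
  by (simp_all add: tens_def vec_eq_iff algebra_simps)

lemmas tens_lin = tens_add_left tens_add_right tens_diff_left tens_diff_right tens_scale_left tens_scale_right

lemma tens_cross_self:
  fixes a b :: "real^3"
  shows "tens (cross3 a b) (cross3 a b) = (norm (cross3 a b))\<^sup>2 *\<^sub>R mat 1
     - ((norm b)\<^sup>2 *\<^sub>R tens a a + (norm a)\<^sup>2 *\<^sub>R tens b b - (b \<bullet> a) *\<^sub>R (tens b a + tens a b))"
  unfolding power2_norm_eq_inner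
  by (simp add: tens_def vec_eq_iff cross3_simps mat_def forall_3 power2_eq_square) 

lemma vieta_raw:
  fixes r c2 h2 b2 n2 :: real
  assumes r: "r > 0" and c2: "c2 > 0" and b2: "b2 > 0" and n2: "n2 > 0"
  defines "s \<equiv> sqrt ((c2 - h2)\<^sup>2 * n2\<^sup>2 + 4 * b2 * c2 * n2)"
  defines "cs \<equiv> r * ((1/2) * ((c2 + h2) * n2 + - s))"
  defines "cf \<equiv> r * ((1/2) * ((c2 + h2) * n2 + s))"
  shows "cs + cf = r * (c2 + h2) * n2" "cs * cf = r\<^sup>2 * c2 * n2 * (h2 * n2 - b2)" "cs \<noteq> cf"
proof -
  have D: "(c2 - h2)\<^sup>2 * n2\<^sup>2 + 4 * b2 * c2 * n2 > 0"
    using assms by (simp add: add_nonneg_pos)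
  have ss: "s\<^sup>2 = (c2 - h2)\<^sup>2 * n2\<^sup>2 + 4 * b2 * c2 * n2" unfolding s_def using D by simp
  have sp: "s > 0" unfolding s_def using D by simp
  show "cs + cf = r * (c2 + h2) * n2" unfolding cs_def cf_def by (simp add: algebra_simps)
  show "cs * cf = r\<^sup>2 * c2 * n2 * (h2 * n2 - b2)"
  proof -
    have "cs * cf = r\<^sup>2 / 4 * (((c2 + h2) * n2)\<^sup>2 - s\<^sup>2)" unfolding cs_def cf_def
      by (simp add: algebra_simps power2_eq_square)
    also have "\<dots> = r\<^sup>2 * c2 * n2 * (h2 * n2 - b2)" unfolding ss by (simp add: algebra_simps power2_eq_square)
    finally show ?thesis .
  qed
  show "cs \<noteq> cf" unfolding cs_def cf_def using sp r by simp
qed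

lemma scal_facts:
  fixes rho pr :: "real^3 \<Rightarrow> real" and H :: "real^3 \<Rightarrow> real^3"
  assumes r: "rho x > 0" and c: "csq rho pr gam x > 0" and cr: "cross3 \<xi> (H x) \<noteq> 0"
  defines "cs \<equiv> rho x * cs2 rho pr H gam x \<xi>" and "cf \<equiv> rho x * cf2 rho pr H gam x \<xi>"
  shows "cs + cf = (gam * pr x + (norm (H x))\<^sup>2) * (norm \<xi>)\<^sup>2"
    "cs * cf = gam * pr x * (norm \<xi>)\<^sup>2 * (H x \<bullet> \<xi>)\<^sup>2"
    "cs \<noteq> cf"
    "(norm (cross3 \<xi> (H x)))\<^sup>2 + (H x \<bullet> \<xi>)\<^sup>2 = (norm \<xi>)\<^sup>2 * (norm (H x))\<^sup>2"
proof -
  have xi: "\<xi> \<noteq> 0" using cr by auto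
  have n2: "(norm \<xi>)\<^sup>2 > 0" using xi by simp
  have b2: "(norm (cross3 \<xi> (H x)))\<^sup>2 / rho x > 0" using cr r by simp
  note V = vieta_raw[OF r c b2 n2, where ?h2.0 = "(norm (H x))\<^sup>2 / rho x"]
  have lag: "(norm (cross3 \<xi> (H x)))\<^sup>2 + (H x \<bullet> \<xi>)\<^sup>2 = (norm \<xi>)\<^sup>2 * (norm (H x))\<^sup>2"
    using norm_cross_dot[of \<xi> "H x"] by (simp add: inner_commute power_mult_distrib)
  show "(norm (cross3 \<xi> (H x)))\<^sup>2 + (H x \<bullet> \<xi>)\<^sup>2 = (norm \<xi>)\<^sup>2 * (norm (H x))\<^sup>2" by (rule lag)
  have cs: "cs = rho x * ((1/2) * ((csq rho pr gam x + (norm (H x))\<^sup>2 / rho x) * (norm \<xi>)\<^sup>2 + - sqrt ((csq rho pr gam x - (norm (H x))\<^sup>2 / rho x)\<^sup>2 * ((norm \<xi>)\<^sup>2)\<^sup>2 + 4 * ((norm (cross3 \<xi> (H x)))\<^sup>2 / rho x) * csq rho pr gam x * (norm \<xi>)\<^sup>2)))"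
    unfolding cs_def fast_slow_def Let_def by simp
  have cf: "cf = rho x * ((1/2) * ((csq rho pr gam x + (norm (H x))\<^sup>2 / rho x) * (norm \<xi>)\<^sup>2 + sqrt ((csq rho pr gam x - (norm (H x))\<^sup>2 / rho x)\<^sup>2 * ((norm \<xi>)\<^sup>2)\<^sup>2 + 4 * ((norm (cross3 \<xi> (H x)))\<^sup>2 / rho x) * csq rho pr gam x * (norm \<xi>)\<^sup>2)))"
    unfolding cf_def fast_slow_def Let_def by simp
  show "cs + cf = (gam * pr x + (norm (H x))\<^sup>2) * (norm \<xi>)\<^sup>2"
    unfolding cs cf V(1) using r by (simp add: csq_def field_simps)
  show "cs \<noteq> cf" unfolding cs cf using V(3) .
  have "cs * cf = (rho x)\<^sup>2 * csq rho pr gam x * (norm \<xi>)\<^sup>2 * ((norm (H x))\<^sup>2 / rho x * (norm \<xi>)\<^sup>2 - (norm (cross3 \<xi> (H x)))\<^sup>2 / rho x)"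
    unfolding cs cf by (rule V(2))
  also have "\<dots> = gam * pr x * (norm \<xi>)\<^sup>2 * ((norm (H x))\<^sup>2 * (norm \<xi>)\<^sup>2 - (norm (cross3 \<xi> (H x)))\<^sup>2)"
    using r by (simp add: csq_def field_simps power2_eq_square)
  also have "\<dots> = gam * pr x * (norm \<xi>)\<^sup>2 * (H x \<bullet> \<xi>)\<^sup>2"
  proof -
    have "(norm (H x))\<^sup>2 * (norm \<xi>)\<^sup>2 - (norm (cross3 \<xi> (H x)))\<^sup>2 = (H x \<bullet> \<xi>)\<^sup>2"
      using lag by (smt (verit) mult.commute)
    then show ?thesis by simp
  qed
  finally show "cs * cf = gam * pr x * (norm \<xi>)\<^sup>2 * (H x \<bullet> \<xi>)\<^sup>2" .
qed

lemma eig_scalar: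
  fixes A gp hh hx n2 bb c c' :: real
  assumes A: "A = gp + hh" and s: "c + c' = A * n2" and p: "c * c' = gp * n2 * hx\<^sup>2"
    and lag: "bb + hx\<^sup>2 = n2 * hh" and bb: "bb > 0" and n2: "n2 > 0" and hx: "hx \<noteq> 0" and cc: "c \<noteq> c'"
  shows "(c - hx\<^sup>2) * (c' - hx\<^sup>2) = - hx\<^sup>2 * bb" "c - hx\<^sup>2 \<noteq> 0"
    "hx\<^sup>2 * n2\<^sup>2 * hh - 2 * hx\<^sup>2 * n2 * c + c\<^sup>2 * n2 = n2 * (c - c') * (c - hx\<^sup>2)"
    "c\<^sup>2 - A * n2 * c + gp * hx\<^sup>2 * n2 = 0"
proof -
  have c': "c' = A * n2 - c" using s by simp
  show q: "c\<^sup>2 - A * n2 * c + gp * hx\<^sup>2 * n2 = 0" using p unfolding c' by (simp add: algebra_simps power2_eq_square)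
  show e1: "(c - hx\<^sup>2) * (c' - hx\<^sup>2) = - hx\<^sup>2 * bb"
  proof -
    have "(c - hx\<^sup>2) * (c' - hx\<^sup>2) = c * c' - hx\<^sup>2 * (c + c') + hx\<^sup>2 * hx\<^sup>2" by (simp add: algebra_simps)
    also have "\<dots> = hx\<^sup>2 * (gp * n2 - A * n2 + hx\<^sup>2)" unfolding p s by (simp add: algebra_simps)
    also have "\<dots> = - hx\<^sup>2 * bb"
    proof -
      have l2: "hx\<^sup>2 = n2 * hh - bb" using lag by simp
      show ?thesis unfolding A l2 by (simp add: algebra_simps)
    qed
    finally show ?thesis .
  qed
  show "c - hx\<^sup>2 \<noteq> 0" using e1 hx bb by auto
  show "hx\<^sup>2 * n2\<^sup>2 * hh - 2 * hx\<^sup>2 * n2 * c + c\<^sup>2 * n2 = n2 * (c - c') * (c - hx\<^sup>2)"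
  proof -
    have "n2 * (c - c') * (c - hx\<^sup>2) = n2 * (c\<^sup>2 - c * hx\<^sup>2 - c * c' + c' * hx\<^sup>2)" by (simp add: algebra_simps power2_eq_square)
    also have "\<dots> = n2 * (c\<^sup>2 - c * hx\<^sup>2 - gp * n2 * hx\<^sup>2 + c' * hx\<^sup>2)" by (simp add: p)
    also have "\<dots> = n2 * (c\<^sup>2 - c * hx\<^sup>2 - gp * n2 * hx\<^sup>2 + (A * n2 - c) * hx\<^sup>2)" by (simp add: c')
    also have "\<dots> = hx\<^sup>2 * n2\<^sup>2 * hh - 2 * hx\<^sup>2 * n2 * c + c\<^sup>2 * n2" unfolding A by (simp add: algebra_simps power2_eq_square)
    finally show ?thesis by simp
  qed
qed

lemma pi23:
  fixes \<xi> Hv :: "real^3" and gp c c' r \<tau> :: real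
  defines "hx \<equiv> Hv \<bullet> \<xi>" and "n2 \<equiv> (norm \<xi>)\<^sup>2" and "hh \<equiv> (norm Hv)\<^sup>2"
    and "bb \<equiv> (norm (cross3 \<xi> Hv))\<^sup>2"
  defines "u \<equiv> (hx * n2) *\<^sub>R Hv - c *\<^sub>R \<xi>"
  assumes s: "c + c' = (gp + hh) * n2" and p: "c * c' = gp * n2 * hx\<^sup>2"
    and cr: "cross3 \<xi> Hv \<noteq> 0" and hx: "hx \<noteq> 0" and cc: "c \<noteq> c'"
  shows "(1 / (c - c')) *\<^sub>R ((gp + hh) *\<^sub>R tens \<xi> \<xi> - hx *\<^sub>R (tens \<xi> Hv + tens Hv \<xi>)
           + (hx\<^sup>2 / (c - hx\<^sup>2)) *\<^sub>R (hh *\<^sub>R tens \<xi> \<xi> + n2 *\<^sub>R tens Hv Hv - hx *\<^sub>R (tens Hv \<xi> + tens \<xi> Hv)))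
         = (1 / (u \<bullet> u)) *\<^sub>R tens u u"
    "((r * \<tau>\<^sup>2 - hx\<^sup>2) *\<^sub>R mat 1 - (gp + hh) *\<^sub>R tens \<xi> \<xi> + hx *\<^sub>R (tens \<xi> Hv + tens Hv \<xi>)) *v u
         = (r * \<tau>\<^sup>2 - c) *\<^sub>R u"
    "u \<bullet> u \<noteq> 0"
    "u \<bullet> u = n2 * (c - c') * (c - hx\<^sup>2)"
proof -
  have xi: "\<xi> \<noteq> 0" using cr by auto
  have n2: "n2 > 0" using xi unfolding n2_def by simp
  have bb: "bb > 0" using cr unfolding bb_def by simp
  have lag: "bb + hx\<^sup>2 = n2 * hh"
    using norm_cross_dot[of \<xi> Hv] unfolding bb_def hx_def n2_def hh_def by (simp add: inner_commute power_mult_distrib)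
  note E = eig_scalar[OF refl s p lag bb n2 hx cc]
  have uu: "u \<bullet> u = hx\<^sup>2 * n2\<^sup>2 * hh - 2 * hx\<^sup>2 * n2 * c + c\<^sup>2 * n2"
    unfolding u_def hh_def n2_def hx_def power2_norm_eq_inner
    by (simp add: inner_diff_left inner_diff_right inner_commute algebra_simps power2_eq_square)
  show uu2: "u \<bullet> u = n2 * (c - c') * (c - hx\<^sup>2)" using uu E(3) by simp
  show unz: "u \<bullet> u \<noteq> 0" unfolding uu2 using n2 cc E(2) by simp
  have tu: "tens u u = c\<^sup>2 *\<^sub>R tens \<xi> \<xi> + (- (hx * n2 * c)) *\<^sub>R (tens \<xi> Hv + tens Hv \<xi>) + (hx * n2)\<^sup>2 *\<^sub>R tens Hv Hv"
    unfolding u_def by (simp add: tens_lin algebra_simps power2_eq_square)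
  define k where "k = hx\<^sup>2 / (c - hx\<^sup>2)"
  have L: "(1 / (c - c')) *\<^sub>R ((gp + hh) *\<^sub>R tens \<xi> \<xi> - hx *\<^sub>R (tens \<xi> Hv + tens Hv \<xi>)
           + k *\<^sub>R (hh *\<^sub>R tens \<xi> \<xi> + n2 *\<^sub>R tens Hv Hv - hx *\<^sub>R (tens Hv \<xi> + tens \<xi> Hv)))
      = ((gp + hh + k * hh) / (c - c')) *\<^sub>R tens \<xi> \<xi> + (- (hx + k * hx) / (c - c')) *\<^sub>R (tens \<xi> Hv + tens Hv \<xi>)
        + (k * n2 / (c - c')) *\<^sub>R tens Hv Hv"
    by (simp add: algebra_simps divide_inverse scaleR_add_left)
  have c1: "(gp + hh + k * hh) / (c - c') = c\<^sup>2 / (u \<bullet> u)"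
  proof -
    have d1: "c - hx\<^sup>2 \<noteq> 0" using E(2) .
    have d2: "c - c' \<noteq> 0" using cc by simp
    have num: "n2 * ((gp + hh) * (c - hx\<^sup>2) + hx\<^sup>2 * hh) = c\<^sup>2" using E(4) by (simp add: algebra_simps)
    have "(gp + hh + k * hh) / (c - c') = ((gp + hh) * (c - hx\<^sup>2) + hx\<^sup>2 * hh) / ((c - hx\<^sup>2) * (c - c'))"
      unfolding k_def using d1 d2 by (simp add: field_simps)
    also have "\<dots> = (n2 * ((gp + hh) * (c - hx\<^sup>2) + hx\<^sup>2 * hh)) / (n2 * (c - c') * (c - hx\<^sup>2))"
      using n2 by (simp add: mult_ac)
    also have "\<dots> = c\<^sup>2 / (u \<bullet> u)" unfolding num uu2 ..
    finally show ?thesis .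
  qed
  have c2: "- (hx + k * hx) / (c - c') = - (hx * n2 * c) / (u \<bullet> u)"
  proof -
    have d1: "c - hx\<^sup>2 \<noteq> 0" using E(2) .
    have d2: "c - c' \<noteq> 0" using cc by simp
    have "- (hx + k * hx) / (c - c') = - (hx * c) / ((c - hx\<^sup>2) * (c - c'))"
      unfolding k_def using d1 d2 by (simp add: field_simps)
    also have "\<dots> = - (n2 * (hx * c)) / (n2 * (c - c') * (c - hx\<^sup>2))"
      using n2 by (simp add: mult_ac)
    also have "\<dots> = - (hx * n2 * c) / (u \<bullet> u)" unfolding uu2 by (simp add: mult_ac)
    finally show ?thesis .
  qed
  have c3: "k * n2 / (c - c') = (hx * n2)\<^sup>2 / (u \<bullet> u)"
  proof -
    have d1: "c - hx\<^sup>2 \<noteq> 0" using E(2) .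
    have d2: "c - c' \<noteq> 0" using cc by simp
    have "k * n2 / (c - c') = (hx\<^sup>2 * n2) / ((c - hx\<^sup>2) * (c - c'))"
      unfolding k_def using d1 d2 by (simp add: field_simps)
    also have "\<dots> = (n2 * (hx\<^sup>2 * n2)) / (n2 * (c - c') * (c - hx\<^sup>2))"
      using n2 by (simp add: mult_ac)
    also have "\<dots> = (hx * n2)\<^sup>2 / (u \<bullet> u)" unfolding uu2 by (simp add: mult_ac power2_eq_square)
    finally show ?thesis .
  qed
  show "(1 / (c - c')) *\<^sub>R ((gp + hh) *\<^sub>R tens \<xi> \<xi> - hx *\<^sub>R (tens \<xi> Hv + tens Hv \<xi>)
           + (hx\<^sup>2 / (c - hx\<^sup>2)) *\<^sub>R (hh *\<^sub>R tens \<xi> \<xi> + n2 *\<^sub>R tens Hv Hv - hx *\<^sub>R (tens Hv \<xi> + tens \<xi> Hv)))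
         = (1 / (u \<bullet> u)) *\<^sub>R tens u u"
    using L unfolding k_def[symmetric] c1 c2 c3 tu by (simp add: algebra_simps divide_inverse)
  have xu: "\<xi> \<bullet> u = n2 * (hx\<^sup>2 - c)"
    unfolding u_def hx_def n2_def power2_norm_eq_inner by (simp add: inner_diff_right inner_commute algebra_simps power2_eq_square)
  have hu: "Hv \<bullet> u = hx * n2 * hh - c * hx"
    unfolding u_def hx_def hh_def power2_norm_eq_inner by (simp add: inner_diff_right inner_commute algebra_simps power2_eq_square)
  have "((r * \<tau>\<^sup>2 - hx\<^sup>2) *\<^sub>R mat 1 - (gp + hh) *\<^sub>R tens \<xi> \<xi> + hx *\<^sub>R (tens \<xi> Hv + tens Hv \<xi>)) *v u
     = (r * \<tau>\<^sup>2 - hx\<^sup>2) *\<^sub>R u - ((gp + hh) * n2 * (hx\<^sup>2 - c)) *\<^sub>R \<xi> + (hx * (hx * n2 * hh - c * hx)) *\<^sub>R \<xi>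
        + (hx * (n2 * (hx\<^sup>2 - c))) *\<^sub>R Hv"
    by (simp add: matrix_vector_mult_add_rdistrib matrix_vector_mult_diff_rdistrib scaleR_matrix_vector_assoc[symmetric]
        tens_mulv xu hu scaleR_add_right scaleR_scaleR mult.assoc)
  also have "\<dots> = (r * \<tau>\<^sup>2 - c) *\<^sub>R u"
  proof -
    have q: "(gp + hh) * n2 * (hx\<^sup>2 - c) - hx * (hx * n2 * hh - c * hx) = c * (hx\<^sup>2 - c)"
      using E(4) by (simp add: algebra_simps power2_eq_square)
    have a1: "(r * \<tau>\<^sup>2 - hx\<^sup>2) * (hx * n2) + hx * (n2 * (hx\<^sup>2 - c)) = (r * \<tau>\<^sup>2 - c) * (hx * n2)"
      by (simp add: algebra_simps)
    have a2: "- (r * \<tau>\<^sup>2 - hx\<^sup>2) * c - c * (hx\<^sup>2 - c) = - (r * \<tau>\<^sup>2 - c) * c"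
      by (simp add: algebra_simps)
    have "(r * \<tau>\<^sup>2 - hx\<^sup>2) *\<^sub>R u - ((gp + hh) * n2 * (hx\<^sup>2 - c)) *\<^sub>R \<xi> + (hx * (hx * n2 * hh - c * hx)) *\<^sub>R \<xi>
        + (hx * (n2 * (hx\<^sup>2 - c))) *\<^sub>R Hv
      = ((r * \<tau>\<^sup>2 - hx\<^sup>2) * (hx * n2) + hx * (n2 * (hx\<^sup>2 - c))) *\<^sub>R Hv
        + (- (r * \<tau>\<^sup>2 - hx\<^sup>2) * c - ((gp + hh) * n2 * (hx\<^sup>2 - c) - hx * (hx * n2 * hh - c * hx))) *\<^sub>R \<xi>"
      unfolding u_def by (simp add: algebra_simps)
    also have "\<dots> = ((r * \<tau>\<^sup>2 - c) * (hx * n2)) *\<^sub>R Hv + (- (r * \<tau>\<^sup>2 - c) * c) *\<^sub>R \<xi>"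
      unfolding q a1 a2 ..
    also have "\<dots> = (r * \<tau>\<^sup>2 - c) *\<^sub>R u" unfolding u_def by (simp add: algebra_simps)
    finally show ?thesis .
  qed
  finally show "((r * \<tau>\<^sup>2 - hx\<^sup>2) *\<^sub>R mat 1 - (gp + hh) *\<^sub>R tens \<xi> \<xi> + hx *\<^sub>R (tens \<xi> Hv + tens Hv \<xi>)) *v u
         = (r * \<tau>\<^sup>2 - c) *\<^sub>R u" .
qed

definition UU :: "(real^3 \<Rightarrow> real) \<Rightarrow> (real^3 \<Rightarrow> real) \<Rightarrow> (real^3 \<Rightarrow> real^3) \<Rightarrow> real \<Rightarrow> nat \<Rightarrow> pt \<Rightarrow> real^3" where
  "UU rho pr H gam k z = (case z of (t, x, \<tau>, \<xi>) \<Rightarrow>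
     (if k = 1 then cross3 \<xi> (H x)
      else ((H x \<bullet> \<xi>) * (norm \<xi>)\<^sup>2) *\<^sub>R H x - (rho x * fast_slow (k \<noteq> 2) rho pr H gam x \<xi>) *\<^sub>R \<xi>))"

definition goodpt :: "(real^3 \<Rightarrow> real) \<Rightarrow> (real^3 \<Rightarrow> real) \<Rightarrow> (real^3 \<Rightarrow> real^3) \<Rightarrow> real \<Rightarrow> pt \<Rightarrow> bool" where
  "goodpt rho pr H gam z = (case z of (t, x, \<tau>, \<xi>) \<Rightarrow>
     rho x > 0 \<and> csq rho pr gam x > 0 \<and> \<xi> \<bullet> H x \<noteq> 0 \<and> cross3 \<xi> (H x) \<noteq> 0)"

lemma pointwise_U:
  assumes g: "goodpt rho pr H gam z" and k: "k \<in> {1,2,3::nat}"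
  shows "ppi rho pr H gam k z = (1 / (UU rho pr H gam k z \<bullet> UU rho pr H gam k z)) *\<^sub>R
            tens (UU rho pr H gam k z) (UU rho pr H gam k z)"
    "UU rho pr H gam k z \<bullet> UU rho pr H gam k z \<noteq> 0"
    "p2 rho pr H gam z *v UU rho pr H gam k z = qq rho pr H gam k z *\<^sub>R UU rho pr H gam k z"
proof -
  obtain t x \<tau> \<xi> where z: "z = (t, x, \<tau>, \<xi>)" by (cases z) auto
  have r: "rho x > 0" and c: "csq rho pr gam x > 0" and hx0: "\<xi> \<bullet> H x \<noteq> 0" and cr: "cross3 \<xi> (H x) \<noteq> 0"
    using g unfolding goodpt_def z by auto
  have hx: "H x \<bullet> \<xi> \<noteq> 0" using hx0 by (simp add: inner_commute)
  note SF = scal_facts[of rho x pr gam \<xi> H, OF r c cr]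
  have xi: "\<xi> \<noteq> 0" using cr by auto
  have bb: "(norm (cross3 \<xi> (H x)))\<^sup>2 > 0" using cr by simp
  have lagm: "(H x \<bullet> \<xi>)\<^sup>2 - (norm (H x))\<^sup>2 * (norm \<xi>)\<^sup>2 = - (norm (cross3 \<xi> (H x)))\<^sup>2"
    using SF(4) by (simp add: algebra_simps)
  have p2z: "p2 rho pr H gam z = (rho x * \<tau>\<^sup>2 - (H x \<bullet> \<xi>)\<^sup>2) *\<^sub>R mat 1 - (gam * pr x + (norm (H x))\<^sup>2) *\<^sub>R tens \<xi> \<xi>
     + (H x \<bullet> \<xi>) *\<^sub>R (tens \<xi> (H x) + tens (H x) \<xi>)" unfolding p2_def z by simp
  consider "k = 1" | "k = 2" | "k = 3" using k by auto
  then have "ppi rho pr H gam k z = (1 / (UU rho pr H gam k z \<bullet> UU rho pr H gam k z)) *\<^sub>R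
            tens (UU rho pr H gam k z) (UU rho pr H gam k z) \<and>
    UU rho pr H gam k z \<bullet> UU rho pr H gam k z \<noteq> 0 \<and>
    p2 rho pr H gam z *v UU rho pr H gam k z = qq rho pr H gam k z *\<^sub>R UU rho pr H gam k z"
  proof cases
    case 1
    have U: "UU rho pr H gam k z = cross3 \<xi> (H x)" unfolding UU_def z 1 by simp
    have uu: "cross3 \<xi> (H x) \<bullet> cross3 \<xi> (H x) = (norm (cross3 \<xi> (H x)))\<^sup>2" by (simp add: power2_norm_eq_inner)
    have P: "ppi rho pr H gam k z = mat 1 + (1 / ((H x \<bullet> \<xi>)\<^sup>2 - (norm (H x))\<^sup>2 * (norm \<xi>)\<^sup>2)) *\<^sub>R w2 H x \<xi>"
      unfolding ppi_def z 1 by simp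
    have T: "tens (cross3 \<xi> (H x)) (cross3 \<xi> (H x)) = (norm (cross3 \<xi> (H x)))\<^sup>2 *\<^sub>R mat 1 - w2 H x \<xi>"
      unfolding tens_cross_self w2_def by (simp add: inner_commute algebra_simps)
    have e1: "ppi rho pr H gam k z = (1 / (UU rho pr H gam k z \<bullet> UU rho pr H gam k z)) *\<^sub>R
            tens (UU rho pr H gam k z) (UU rho pr H gam k z)"
      unfolding P U uu T lagm using bb by (simp add: algebra_simps)
    have xn: "\<xi> \<bullet> cross3 \<xi> (H x) = 0" "H x \<bullet> cross3 \<xi> (H x) = 0" by (simp_all add: dot_cross_self)
    have e3: "p2 rho pr H gam z *v UU rho pr H gam k z = qq rho pr H gam k z *\<^sub>R UU rho pr H gam k z"
      unfolding p2z U
      by (simp add: qq_def z 1 matrix_vector_mult_add_rdistrib matrix_vector_mult_diff_rdistrib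
          scaleR_matrix_vector_assoc[symmetric] tens_mulv xn)
    show ?thesis using e1 e3 U uu bb by simp
  next
    case 2
    define cs where "cs = rho x * cs2 rho pr H gam x \<xi>"
    define cf where "cf = rho x * cf2 rho pr H gam x \<xi>"
    have U: "UU rho pr H gam k z = ((H x \<bullet> \<xi>) * (norm \<xi>)\<^sup>2) *\<^sub>R H x - cs *\<^sub>R \<xi>"
      unfolding UU_def z 2 cs_def by simp
    note PI = pi23[of cs cf "gam * pr x" "H x" \<xi>, OF _ _ cr hx]
    have s: "cs + cf = (gam * pr x + (norm (H x))\<^sup>2) * (norm \<xi>)\<^sup>2" using SF(1) unfolding cs_def cf_def .
    have p: "cs * cf = gam * pr x * (norm \<xi>)\<^sup>2 * (H x \<bullet> \<xi>)\<^sup>2" using SF(2) unfolding cs_def cf_def .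
    have cc: "cs \<noteq> cf" using SF(3) unfolding cs_def cf_def .
    note PI = PI[OF s p cc]
    have P: "ppi rho pr H gam k z = (1 / (cs - cf)) *\<^sub>R ((gam * pr x + (norm (H x))\<^sup>2) *\<^sub>R tens \<xi> \<xi>
           - (H x \<bullet> \<xi>) *\<^sub>R (tens \<xi> (H x) + tens (H x) \<xi>)
           + ((H x \<bullet> \<xi>)\<^sup>2 / (cs - (H x \<bullet> \<xi>)\<^sup>2)) *\<^sub>R ((norm (H x))\<^sup>2 *\<^sub>R tens \<xi> \<xi> + (norm \<xi>)\<^sup>2 *\<^sub>R tens (H x) (H x)
              - (H x \<bullet> \<xi>) *\<^sub>R (tens (H x) \<xi> + tens \<xi> (H x))))"
      unfolding ppi_def z 2 cs_def cf_def w2_def Let_def by simp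
    have Q: "qq rho pr H gam k z = rho x * \<tau>\<^sup>2 - cs" unfolding qq_def z 2 cs_def by (simp add: algebra_simps)
    show ?thesis unfolding P U Q using PI p2z by simp
  next
    case 3
    define cs where "cs = rho x * cs2 rho pr H gam x \<xi>"
    define cf where "cf = rho x * cf2 rho pr H gam x \<xi>"
    have U: "UU rho pr H gam k z = ((H x \<bullet> \<xi>) * (norm \<xi>)\<^sup>2) *\<^sub>R H x - cf *\<^sub>R \<xi>"
      unfolding UU_def z 3 cf_def by simp
    note PI = pi23[of cf cs "gam * pr x" "H x" \<xi>, OF _ _ cr hx]
    have s: "cf + cs = (gam * pr x + (norm (H x))\<^sup>2) * (norm \<xi>)\<^sup>2" using SF(1) unfolding cs_def cf_def by simp
    have p: "cf * cs = gam * pr x * (norm \<xi>)\<^sup>2 * (H x \<bullet> \<xi>)\<^sup>2" using SF(2) unfolding cs_def cf_def by (simp add: mult.commute)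
    have cc: "cf \<noteq> cs" using SF(3) unfolding cs_def cf_def by simp
    note PI = PI[OF s p cc]
    have P: "ppi rho pr H gam k z = (1 / (cf - cs)) *\<^sub>R ((gam * pr x + (norm (H x))\<^sup>2) *\<^sub>R tens \<xi> \<xi>
           - (H x \<bullet> \<xi>) *\<^sub>R (tens \<xi> (H x) + tens (H x) \<xi>)
           + ((H x \<bullet> \<xi>)\<^sup>2 / (cf - (H x \<bullet> \<xi>)\<^sup>2)) *\<^sub>R ((norm (H x))\<^sup>2 *\<^sub>R tens \<xi> \<xi> + (norm \<xi>)\<^sup>2 *\<^sub>R tens (H x) (H x)
              - (H x \<bullet> \<xi>) *\<^sub>R (tens (H x) \<xi> + tens \<xi> (H x))))"
      unfolding ppi_def z 3 cs_def cf_def w2_def Let_def by simp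
    have Q: "qq rho pr H gam k z = rho x * \<tau>\<^sup>2 - cf" unfolding qq_def z 3 cf_def by (simp add: algebra_simps)
    show ?thesis unfolding P U Q using PI p2z by simp
  qed
  then show "ppi rho pr H gam k z = (1 / (UU rho pr H gam k z \<bullet> UU rho pr H gam k z)) *\<^sub>R
            tens (UU rho pr H gam k z) (UU rho pr H gam k z)"
    "UU rho pr H gam k z \<bullet> UU rho pr H gam k z \<noteq> 0"
    "p2 rho pr H gam z *v UU rho pr H gam k z = qq rho pr H gam k z *\<^sub>R UU rho pr H gam k z" by auto
qed

lemma tens_proj_mult:
  assumes "u \<bullet> u \<noteq> 0" "v \<bullet> v \<noteq> 0"
  shows "((1 / (u \<bullet> u)) *\<^sub>R tens u u) ** ((1 / (v \<bullet> v)) *\<^sub>R tens v v) = ((u \<bullet> v) / ((u \<bullet> u) * (v \<bullet> v))) *\<^sub>R tens u v"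
  by (simp add: matrix_scalar_ac scalar_matrix_assoc[symmetric] tens_mult)

lemma pointwise_orth_sum:
  assumes g: "goodpt rho pr H gam z"
  shows "UU rho pr H gam 1 z \<bullet> UU rho pr H gam 2 z = 0" "UU rho pr H gam 1 z \<bullet> UU rho pr H gam 3 z = 0"
    "UU rho pr H gam 2 z \<bullet> UU rho pr H gam 3 z = 0"
    "ppi rho pr H gam 1 z + ppi rho pr H gam 2 z + ppi rho pr H gam 3 z = mat 1"
proof -
  obtain t x \<tau> \<xi> where z: "z = (t, x, \<tau>, \<xi>)" by (cases z) auto
  have r: "rho x > 0" and c: "csq rho pr gam x > 0" and hx0: "\<xi> \<bullet> H x \<noteq> 0" and cr: "cross3 \<xi> (H x) \<noteq> 0"
    using g unfolding goodpt_def z by auto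
  have hx: "H x \<bullet> \<xi> \<noteq> 0" using hx0 by (simp add: inner_commute)
  note SF = scal_facts[of rho x pr gam \<xi> H, OF r c cr]
  define cs where "cs = rho x * cs2 rho pr H gam x \<xi>"
  define cf where "cf = rho x * cf2 rho pr H gam x \<xi>"
  have s: "cs + cf = (gam * pr x + (norm (H x))\<^sup>2) * (norm \<xi>)\<^sup>2" using SF(1) unfolding cs_def cf_def .
  have p: "cs * cf = gam * pr x * (norm \<xi>)\<^sup>2 * (H x \<bullet> \<xi>)\<^sup>2" using SF(2) unfolding cs_def cf_def .
  have cc: "cs \<noteq> cf" using SF(3) unfolding cs_def cf_def .
  have U1: "UU rho pr H gam 1 z = cross3 \<xi> (H x)" unfolding UU_def z by simp
  have U2: "UU rho pr H gam 2 z = ((H x \<bullet> \<xi>) * (norm \<xi>)\<^sup>2) *\<^sub>R H x - cs *\<^sub>R \<xi>" unfolding UU_def z cs_def by simp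
  have U3: "UU rho pr H gam 3 z = ((H x \<bullet> \<xi>) * (norm \<xi>)\<^sup>2) *\<^sub>R H x - cf *\<^sub>R \<xi>" unfolding UU_def z cf_def by simp
  show "UU rho pr H gam 1 z \<bullet> UU rho pr H gam 2 z = 0" "UU rho pr H gam 1 z \<bullet> UU rho pr H gam 3 z = 0"
    unfolding U1 U2 U3 by (simp_all add: inner_diff_right dot_cross_self)
  have "UU rho pr H gam 2 z \<bullet> UU rho pr H gam 3 z =
     (H x \<bullet> \<xi>)\<^sup>2 * ((norm \<xi>)\<^sup>2)\<^sup>2 * (norm (H x))\<^sup>2 - (H x \<bullet> \<xi>)\<^sup>2 * (norm \<xi>)\<^sup>2 * (cs + cf) + (cs * cf) * (norm \<xi>)\<^sup>2"
    unfolding U2 U3 power2_norm_eq_inner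
    by (simp add: inner_diff_left inner_diff_right inner_commute algebra_simps power2_eq_square)
  also have "\<dots> = 0" unfolding s p by (simp add: algebra_simps power2_eq_square)
  finally show "UU rho pr H gam 2 z \<bullet> UU rho pr H gam 3 z = 0" .
  define W where "W = w2 H x \<xi>"
  define B where "B = (gam * pr x + (norm (H x))\<^sup>2) *\<^sub>R tens \<xi> \<xi> - (H x \<bullet> \<xi>) *\<^sub>R (tens \<xi> (H x) + tens (H x) \<xi>)"
  define bb where "bb = (norm (cross3 \<xi> (H x)))\<^sup>2"
  have bb: "bb > 0" unfolding bb_def using cr by simp
  have lagm: "(H x \<bullet> \<xi>)\<^sup>2 - (norm (H x))\<^sup>2 * (norm \<xi>)\<^sup>2 = - bb"
    using SF(4) unfolding bb_def by (simp add: algebra_simps)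
  have P1: "ppi rho pr H gam 1 z = mat 1 + (1 / (- bb)) *\<^sub>R W"
    using lagm unfolding ppi_def z W_def by simp
  have P2: "ppi rho pr H gam 2 z = (1 / (cs - cf)) *\<^sub>R (B + ((H x \<bullet> \<xi>)\<^sup>2 / (cs - (H x \<bullet> \<xi>)\<^sup>2)) *\<^sub>R W)"
    unfolding ppi_def z cs_def cf_def W_def B_def Let_def by simp
  have P3: "ppi rho pr H gam 3 z = (1 / (cf - cs)) *\<^sub>R (B + ((H x \<bullet> \<xi>)\<^sup>2 / (cf - (H x \<bullet> \<xi>)\<^sup>2)) *\<^sub>R W)"
    unfolding ppi_def z cs_def cf_def W_def B_def Let_def by simp
  have xi: "\<xi> \<noteq> 0" using cr by auto
  have n2: "(norm \<xi>)\<^sup>2 > 0" using xi by simp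
  have lag: "bb + (H x \<bullet> \<xi>)\<^sup>2 = (norm \<xi>)\<^sup>2 * (norm (H x))\<^sup>2" using SF(4) unfolding bb_def .
  note E = eig_scalar[OF refl s p lag bb n2 hx cc]
  define k2 where "k2 = (H x \<bullet> \<xi>)\<^sup>2 / (cs - (H x \<bullet> \<xi>)\<^sup>2)"
  define k3 where "k3 = (H x \<bullet> \<xi>)\<^sup>2 / (cf - (H x \<bullet> \<xi>)\<^sup>2)"
  have d1: "cs - (H x \<bullet> \<xi>)\<^sup>2 \<noteq> 0" using E(2) .
  have d2: "cf - (H x \<bullet> \<xi>)\<^sup>2 \<noteq> 0" using E(1) bb hx by auto
  have d3: "cs - cf \<noteq> 0" using cc by simp
  have kk: "(k2 - k3) / (cs - cf) = 1 / bb"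
  proof -
    have "k2 - k3 = (H x \<bullet> \<xi>)\<^sup>2 * (cf - cs) / ((cs - (H x \<bullet> \<xi>)\<^sup>2) * (cf - (H x \<bullet> \<xi>)\<^sup>2))"
      unfolding k2_def k3_def using d1 d2 by (simp add: field_simps)
    also have "\<dots> = (H x \<bullet> \<xi>)\<^sup>2 * (cf - cs) / (- (H x \<bullet> \<xi>)\<^sup>2 * bb)" unfolding E(1) ..
    also have "\<dots> = (cs - cf) / bb" using hx bb by (simp add: field_simps)
    finally show ?thesis using d3 by simp
  qed
  have P23: "ppi rho pr H gam 2 z + ppi rho pr H gam 3 z = ((k2 - k3) / (cs - cf)) *\<^sub>R W"
  proof -
    have m: "1 / (cf - cs) = - (1 / (cs - cf))" by (simp add: minus_divide_right)
    show ?thesis unfolding P2 P3 k2_def[symmetric] k3_def[symmetric] m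
      by (simp add: algebra_simps diff_divide_distrib)
  qed
  show "ppi rho pr H gam 1 z + ppi rho pr H gam 2 z + ppi rho pr H gam 3 z = mat 1"
    unfolding add.assoc P23 kk P1 by simp
qed

lemma mat_scaleR_right: "(M::real^3^3) ** (c *\<^sub>R N) = c *\<^sub>R (M ** N)"
  by (simp add: matrix_scalar_ac scalar_matrix_assoc)

lemma UU_orth:
  assumes g: "goodpt rho pr H gam z" and k: "k \<in> {1,2,3::nat}" and l: "l \<in> {1,2,3::nat}" and kl: "k \<noteq> l"
  shows "UU rho pr H gam k z \<bullet> UU rho pr H gam l z = 0"
  using pointwise_orth_sum[OF g] k l kl by (auto simp: inner_commute)

lemma proj_mult:
  assumes g: "goodpt rho pr H gam z" and k: "k \<in> {1,2,3::nat}" and l: "l \<in> {1,2,3::nat}"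
  shows "ppi rho pr H gam k z ** ppi rho pr H gam l z = (if k = l then ppi rho pr H gam l z else 0)"
proof -
  note A = pointwise_U[OF g k] and B = pointwise_U[OF g l]
  show ?thesis
  proof (cases "k = l")
    case True
    then show ?thesis unfolding A(1) B(1) tens_proj_mult[OF A(2) B(2)] using B(2) by (simp add: power2_eq_square)
  next
    case False
    then show ?thesis unfolding A(1) B(1) tens_proj_mult[OF A(2) B(2)] using UU_orth[OF g k l False] by simp
  qed
qed

lemma proj_sym:
  assumes g: "goodpt rho pr H gam z" and k: "k \<in> {1,2,3::nat}"
  shows "transpose (ppi rho pr H gam k z) = ppi rho pr H gam k z"
  unfolding pointwise_U(1)[OF g k] transpose_scalar transpose_tens ..

lemma p2_sym: "transpose (p2 rho pr H gam z) = p2 rho pr H gam z"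
  by (cases z) (simp add: p2_def transpose_scalar transpose_tens algebra_simps transpose_def[of "_ + _"]
      transpose_def[of "_ - _"] vec_eq_iff tens_def mat_def)

lemma p2_decomp:
  assumes g: "goodpt rho pr H gam z"
  shows "p2 rho pr H gam z = qq rho pr H gam 1 z *\<^sub>R ppi rho pr H gam 1 z + qq rho pr H gam 2 z *\<^sub>R ppi rho pr H gam 2 z
     + qq rho pr H gam 3 z *\<^sub>R ppi rho pr H gam 3 z"
proof -
  have e: "p2 rho pr H gam z ** ppi rho pr H gam k z = qq rho pr H gam k z *\<^sub>R ppi rho pr H gam k z"
    if k: "k \<in> {1,2,3::nat}" for k
    unfolding pointwise_U(1)[OF g k]
    by (simp add: mat_scaleR_right mult_tens pointwise_U(3)[OF g k] tens_scale_left)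
  have "p2 rho pr H gam z = p2 rho pr H gam z ** (ppi rho pr H gam 1 z + ppi rho pr H gam 2 z + ppi rho pr H gam 3 z)"
    unfolding pointwise_orth_sum(4)[OF g] by simp
  also have "\<dots> = qq rho pr H gam 1 z *\<^sub>R ppi rho pr H gam 1 z + qq rho pr H gam 2 z *\<^sub>R ppi rho pr H gam 2 z
     + qq rho pr H gam 3 z *\<^sub>R ppi rho pr H gam 3 z"
    unfolding matrix_add_ldistrib by (simp add: e)
  finally show ?thesis .
qed




lemma dd_has:
  assumes "(f has_derivative f') (at z)"
  shows "dir_deriv f v z = f' v"
proof -
  have l: "linear f'" using assms has_derivative_linear by blast
  have c: "((\<lambda>s::real. z + s *\<^sub>R v) has_derivative (\<lambda>s. s *\<^sub>R v)) (at 0)"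
    by (auto intro!: derivative_eq_intros)
  have "((\<lambda>s::real. f (z + s *\<^sub>R v)) has_derivative (\<lambda>s. f' (s *\<^sub>R v))) (at 0)"
    using has_derivative_compose[OF c, of f f'] assms by simp
  then have "((\<lambda>s::real. f (z + s *\<^sub>R v)) has_vector_derivative f' v) (at 0)"
    unfolding has_vector_derivative_def using linear_scale[OF l] by simp
  then show ?thesis unfolding dir_deriv_def by (rule vector_derivative_at)
qed

lemma dd_frechet:
  assumes "f differentiable (at z)"
  shows "dir_deriv f v z = frechet_derivative f (at z) v"
  using dd_has assms frechet_derivative_works by blast

lemma has_derivative_local:
  assumes "open U" "z \<in> U" "\<And>w. w \<in> U \<Longrightarrow> f w = g w" "(g has_derivative g') (at z)"
  shows "(f has_derivative g') (at z)"
  using has_derivative_transform_within_open[of g g' z UNIV U f] assms by auto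

lemma mat_add_rdistrib: "((A::'a::semiring_1^'n^'m) + B) ** C = A ** C + B ** C"
  by (simp add: matrix_matrix_mult_def vec_eq_iff sum.distrib algebra_simps)
lemma mat_diff_rdistrib: "((A::'a::ring_1^'n^'m) - B) ** C = A ** C - B ** C"
  by (simp add: matrix_matrix_mult_def vec_eq_iff sum_subtractf algebra_simps)
lemma mat_diff_ldistrib: "(C::'a::ring_1^'n^'m) ** (A - B) = C ** A - C ** B"
  by (simp add: matrix_matrix_mult_def vec_eq_iff sum_subtractf algebra_simps)
lemma mat_neg_left: "(- (A::'a::ring_1^'n^'m)) ** B = - (A ** B)"
  by (simp add: matrix_matrix_mult_def vec_eq_iff sum_negf)
lemma mat_neg_right: "(A::'a::ring_1^'n^'m) ** (- B) = - (A ** B)"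
  by (simp add: matrix_matrix_mult_def vec_eq_iff sum_negf)

lemma bounded_bilinear_mmult: "bounded_bilinear ((**) :: real^3^3 \<Rightarrow> real^3^3 \<Rightarrow> real^3^3)"
proof -
  have "bilinear ((**) :: real^3^3 \<Rightarrow> real^3^3 \<Rightarrow> real^3^3)"
    unfolding bilinear_def
    by (auto intro!: linearI simp: matrix_add_ldistrib mat_add_rdistrib matrix_scalar_ac scalar_matrix_assoc)
  then show ?thesis using bilinear_conv_bounded_bilinear by blast
qed

lemma bounded_bilinear_tens: "bounded_bilinear tens"
proof -
  have "bilinear tens"
    unfolding bilinear_def by (auto intro!: linearI simp: tens_lin)
  then show ?thesis using bilinear_conv_bounded_bilinear by blast
qed

lemma bounded_bilinear_cross: "bounded_bilinear cross3"
  using bilinear_cross bilinear_conv_bounded_bilinear by blast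

lemma differentiable_bilin:
  assumes "bounded_bilinear B" "f differentiable (at z within S)" "g differentiable (at z within S)"
  shows "(\<lambda>w. B (f w) (g w)) differentiable (at z within S)"
  using assms bounded_bilinear.FDERIV[OF assms(1)] unfolding differentiable_def by blast

lemmas differentiable_mmult = differentiable_bilin[OF bounded_bilinear_mmult]
lemmas differentiable_tens = differentiable_bilin[OF bounded_bilinear_tens]
lemmas differentiable_cross = differentiable_bilin[OF bounded_bilinear_cross]
lemmas differentiable_inner' = differentiable_bilin[OF bounded_bilinear_inner]

lemma differentiable_sqrt_pos:
  assumes "f differentiable (at z)" "f z > 0"
  shows "(\<lambda>w. sqrt (f w)) differentiable (at z)"
  using assms has_derivative_real_sqrt unfolding differentiable_def by blast

lemma differentiable_fst' [derivative_intros]: "(\<lambda>w. fst (f w)) differentiable F" if "f differentiable F"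
  using that bounded_linear_fst unfolding differentiable_def
  by (blast intro: bounded_linear.has_derivative)
lemma differentiable_snd' [derivative_intros]: "(\<lambda>w. snd (f w)) differentiable F" if "f differentiable F"
  using that bounded_linear_snd unfolding differentiable_def
  by (blast intro: bounded_linear.has_derivative)




section \<open>Symbol computation\<close>

definition ee :: "real \<Rightarrow> real^3 \<Rightarrow> real \<times> (real^3) \<Rightarrow> complex" where
  "ee \<tau> \<xi> y = exp (\<i> * complex_of_real (fst y * \<tau> + snd y \<bullet> \<xi>))"

lemma scaleR_cvec3: "r *\<^sub>R (v::complex^3) = complex_of_real r *s v"
  unfolding vec_eq_iff by (simp add: vector_scaleR_component del: scaleR_conv_of_real) (simp add: scaleR_conv_of_real)

lemma bounded_bilinear_smult: "bounded_bilinear (\<lambda>(c::complex) (v::complex^3). c *s v)"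
proof -
  have "bilinear (\<lambda>(c::complex) (v::complex^3). c *s v)"
    unfolding bilinear_def
    by (auto intro!: linearI simp: scaleR_cvec3 scaleR_conv_of_real vector_sadd_rdistrib vector_add_ldistrib)
  then show ?thesis using bilinear_conv_bounded_bilinear by blast
qed

lemma ee_has_derivative:
  "(ee \<tau> \<xi> has_derivative (\<lambda>h. ee \<tau> \<xi> y * (\<i> * complex_of_real (fst h * \<tau> + snd h \<bullet> \<xi>)))) (at y)"
proof -
  have p: "((\<lambda>y. \<i> * complex_of_real (fst y * \<tau> + snd y \<bullet> \<xi>)) has_derivative
      (\<lambda>h. \<i> * complex_of_real (fst h * \<tau> + snd h \<bullet> \<xi>))) (at y)"
  proof -
    have "bounded_linear (\<lambda>h::real \<times> (real^3). \<i> * complex_of_real (fst h * \<tau> + snd h \<bullet> \<xi>))"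
      by (intro bounded_linear_intros bounded_linear_mult_right[THEN bounded_linear_compose] 
          bounded_linear_of_real[THEN bounded_linear_compose]) 
    then show ?thesis by (rule bounded_linear_imp_has_derivative)
  qed
  have "((\<lambda>y. exp (\<i> * complex_of_real (fst y * \<tau> + snd y \<bullet> \<xi>))) has_derivative
     (\<lambda>h. \<i> * complex_of_real (fst h * \<tau> + snd h \<bullet> \<xi>) * exp (\<i> * complex_of_real (fst y * \<tau> + snd y \<bullet> \<xi>)))) (at y)"
    using has_derivative_compose[OF p has_field_derivative_imp_has_derivative[OF DERIV_exp]]
    by (simp add: mult_ac)
  then show ?thesis unfolding ee_def by (simp add: mult_ac)
qed


lemma has_derivative_snd_comp:
  assumes "(F has_derivative F') (at (snd y))"
  shows "((\<lambda>y::real \<times> (real^3). F (snd y)) has_derivative (\<lambda>h. F' (snd h))) (at y)"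
  using has_derivative_compose[OF has_derivative_snd[OF has_derivative_ident] assms] by simp

lemma ee_smult_has_derivative:
  fixes F :: "real^3 \<Rightarrow> complex^3"
  assumes "(F has_derivative F') (at (snd y))"
  shows "((\<lambda>y. ee \<tau> \<xi> y *s F (snd y)) has_derivative
    (\<lambda>h. ee \<tau> \<xi> y *s F' (snd h) + (ee \<tau> \<xi> y * (\<i> * complex_of_real (fst h * \<tau> + snd h \<bullet> \<xi>))) *s F (snd y))) (at y)"
  using bounded_bilinear.FDERIV[OF bounded_bilinear_smult ee_has_derivative has_derivative_snd_comp[OF assms]]
  by simp

lemma ee_mult_has_derivative:
  fixes f :: "real^3 \<Rightarrow> complex"
  assumes "(f has_derivative f') (at (snd y))"
  shows "((\<lambda>y. ee \<tau> \<xi> y * f (snd y)) has_derivative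
    (\<lambda>h. ee \<tau> \<xi> y * f' (snd h) + (ee \<tau> \<xi> y * (\<i> * complex_of_real (fst h * \<tau> + snd h \<bullet> \<xi>))) * f (snd y))) (at y)"
  using bounded_bilinear.FDERIV[OF bounded_bilinear_mult ee_has_derivative has_derivative_snd_comp[OF assms]]
  by simp

lemma pd3_has: "(F has_derivative F') (at x) \<Longrightarrow> pd3 F j x = F' (axis j 1)"
  unfolding pd3_def by (rule dd_has)

lemma inner_axis1: "axis j 1 \<bullet> (\<xi>::real^'n) = \<xi> $ j"
  by (simp add: inner_axis')

lemma dsp_ee:
  fixes F :: "real^3 \<Rightarrow> complex^3"
  assumes "F differentiable (at (snd y))"
  shows "dsp (\<lambda>y. ee \<tau> \<xi> y *s F (snd y)) j y = ee \<tau> \<xi> y *s (pd3 F j (snd y) + (\<i> * complex_of_real (\<xi> $ j)) *s F (snd y))"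
proof -
  obtain F' where F: "(F has_derivative F') (at (snd y))" using assms unfolding differentiable_def by blast
  show ?thesis unfolding dsp_def dd_has[OF ee_smult_has_derivative[OF F]] pd3_has[OF F]
    by (simp add: inner_axis1 vector_add_ldistrib vector_smult_assoc)
qed

lemma dtm_ee:
  fixes F :: "real^3 \<Rightarrow> complex^3"
  assumes "F differentiable (at (snd y))"
  shows "dtm (\<lambda>y. ee \<tau> \<xi> y *s F (snd y)) y = ee \<tau> \<xi> y *s ((\<i> * complex_of_real \<tau>) *s F (snd y))"
proof -
  obtain F' where F: "(F has_derivative F') (at (snd y))" using assms unfolding differentiable_def by blast
  have "F' 0 = 0" using F has_derivative_linear linear_0 by blast
  then show ?thesis unfolding dtm_def dd_has[OF ee_smult_has_derivative[OF F]]
    by (simp add: vector_smult_assoc)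
qed

lemma dsp_ee_scalar:
  fixes f :: "real^3 \<Rightarrow> complex"
  assumes "f differentiable (at (snd y))"
  shows "dsp (\<lambda>y. ee \<tau> \<xi> y * f (snd y)) j y = ee \<tau> \<xi> y * (pd3 f j (snd y) + (\<i> * complex_of_real (\<xi> $ j)) * f (snd y))"
proof -
  obtain f' where F: "(f has_derivative f') (at (snd y))" using assms unfolding differentiable_def by blast
  show ?thesis unfolding dsp_def dd_has[OF ee_mult_has_derivative[OF F]] pd3_has[OF F]
    by (simp add: inner_axis1 algebra_simps)
qed

lemma dsp_snd:
  assumes "F differentiable (at (snd y))"
  shows "dsp (\<lambda>y. F (snd y)) j y = pd3 F j (snd y)"
proof -
  obtain F' where F: "(F has_derivative F') (at (snd y))" using assms unfolding differentiable_def by blast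
  show ?thesis unfolding dsp_def dd_has[OF has_derivative_snd_comp[OF F]] pd3_has[OF F] by simp
qed

lemma bounded_linear_cvec: "bounded_linear cvec"
proof -
  have "linear cvec" by (auto intro!: linearI simp: cvec_def vec_eq_iff scaleR_cvec3)
  then show ?thesis using linear_conv_bounded_linear by blast
qed

lemma cvec_has_derivative:
  "(F has_derivative F') (at x) \<Longrightarrow> ((\<lambda>x. cvec (F x)) has_derivative (\<lambda>h. cvec (F' h))) (at x)"
  using bounded_linear.has_derivative[OF bounded_linear_cvec] .

lemma ofreal_has_derivative:
  "(f has_derivative f') (at x) \<Longrightarrow> ((\<lambda>x. complex_of_real (f x)) has_derivative (\<lambda>h. complex_of_real (f' h))) (at x)"
  using bounded_linear.has_derivative[OF bounded_linear_of_real] .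

lemma pd3_cvec:
  assumes "F differentiable (at x)" shows "pd3 (\<lambda>x. cvec (F x)) j x = cvec (pd3 F j x)"
proof -
  obtain F' where F: "(F has_derivative F') (at x)" using assms unfolding differentiable_def by blast
  show ?thesis unfolding pd3_has[OF F] pd3_has[OF cvec_has_derivative[OF F]] ..
qed

lemma pd3_ofreal:
  assumes "f differentiable (at x)" shows "pd3 (\<lambda>x. complex_of_real (f x)) j x = complex_of_real (pd3 f j x)"
proof -
  obtain F' where F: "(f has_derivative F') (at x)" using assms unfolding differentiable_def by blast
  show ?thesis unfolding pd3_has[OF F] pd3_has[OF ofreal_has_derivative[OF F]] ..
qed

lemma differentiable_cvec: "F differentiable (at x) \<Longrightarrow> (\<lambda>x. cvec (F x)) differentiable (at x)"
  unfolding differentiable_def using cvec_has_derivative by blast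

lemma differentiable_ofreal: "f differentiable (at x) \<Longrightarrow> (\<lambda>x. complex_of_real (f x)) differentiable (at x)"
  unfolding differentiable_def using ofreal_has_derivative by blast

lemma cross_cvec: "ccross (cvec a) (cvec b) = cvec (cross3 a b)"
  by (simp add: ccross_def cvec_def cross3_simps vec_eq_iff forall_3)

lemma cdot_cvec: "cdot (cvec a) (cvec b) = complex_of_real (a \<bullet> b)"
  by (simp add: cdot_def cvec_def inner_vec_def)


lemma pd3_const: "pd3 (\<lambda>x. c) j x = 0"
proof -
  have "((\<lambda>x. c) has_derivative (\<lambda>h. 0)) (at x)" by simp
  from pd3_has[OF this] show ?thesis by simp
qed

lemma vector3_smult: "(vector [e * a, e * b, e * c] :: complex^3) = (e::complex) *s vector [a, b, c]"
  by (simp add: vec_eq_iff forall_3 vector_3)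

lemma cdot_smult_left: "cdot (c *s a) b = c * cdot a b"
  by (simp add: cdot_def sum_distrib_left mult.assoc)

lemma ccross_smult_left: "ccross (c *s a) b = c *s ccross a b"
  by (simp add: ccross_def vec_eq_iff forall_3 vector_3 algebra_simps)

lemma ccross_smult_right: "ccross a (c *s b) = c *s ccross a b"
  by (simp add: ccross_def vec_eq_iff forall_3 vector_3 algebra_simps)

lemma cfield_has_derivative:
  fixes A B :: "real^3 \<Rightarrow> real^3"
  assumes "(A has_derivative A') (at x)" "(B has_derivative B') (at x)"
  shows "((\<lambda>x. cvec (A x) + \<i> *s cvec (B x)) has_derivative (\<lambda>h. cvec (A' h) + \<i> *s cvec (B' h))) (at x)"
proof -
  have "bounded_linear (\<lambda>v::complex^3. \<i> *s v)"
  proof -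
    have "linear (\<lambda>v::complex^3. \<i> *s v)"
      by (auto intro!: linearI simp: vec_eq_iff scaleR_cvec3 algebra_simps)
    then show ?thesis using linear_conv_bounded_linear by blast
  qed
  from bounded_linear.has_derivative[OF this cvec_has_derivative[OF assms(2)]]
  show ?thesis using cvec_has_derivative[OF assms(1)] by (auto intro: has_derivative_add)
qed

lemma Xcurl_ee:
  fixes A B :: "real^3 \<Rightarrow> real^3"
  assumes "A differentiable (at (snd y))" "B differentiable (at (snd y))"
  shows "Xcurl (\<lambda>y. ee \<tau> \<xi> y *s (cvec (A (snd y)) + \<i> *s cvec (B (snd y)))) y =
    ee \<tau> \<xi> y *s (cvec (curl3 A (snd y)) + \<i> *s cvec (curl3 B (snd y))
       + \<i> *s cvec (cross3 \<xi> (A (snd y))) - cvec (cross3 \<xi> (B (snd y))))"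
proof -
  obtain A' where A: "(A has_derivative A') (at (snd y))" using assms unfolding differentiable_def by blast
  obtain B' where B: "(B has_derivative B') (at (snd y))" using assms unfolding differentiable_def by blast
  note G = cfield_has_derivative[OF A B]
  have Gd: "(\<lambda>x. cvec (A x) + \<i> *s cvec (B x)) differentiable (at (snd y))"
    using G unfolding differentiable_def by blast
  have D: "dsp (\<lambda>y. ee \<tau> \<xi> y *s (cvec (A (snd y)) + \<i> *s cvec (B (snd y)))) j y =
     ee \<tau> \<xi> y *s (cvec (pd3 A j (snd y)) + \<i> *s cvec (pd3 B j (snd y)) + (\<i> * complex_of_real (\<xi> $ j)) *s (cvec (A (snd y)) + \<i> *s cvec (B (snd y))))" for j
    using dsp_ee[OF Gd, of \<tau> \<xi> j] unfolding pd3_has[OF G] pd3_has[OF A] pd3_has[OF B] by simp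
  show ?thesis unfolding Xcurl_def D curl3_def
    by (simp add: vec_eq_iff forall_3 vector_3 cvec_def cross3_simps algebra_simps)
qed


lemma vector3_axis: "(vector [a, b, c] :: real^3) = a *\<^sub>R axis 1 1 + b *\<^sub>R axis 2 1 + c *\<^sub>R axis 3 1"
  by (simp add: vec_eq_iff forall_3 axis_def)

lemma differentiable_vector3:
  fixes f1 f2 f3 :: "real^3 \<Rightarrow> real"
  assumes "f1 differentiable (at x)" "f2 differentiable (at x)" "f3 differentiable (at x)"
  shows "(\<lambda>x. vector [f1 x, f2 x, f3 x] :: real^3) differentiable (at x)"
  unfolding vector3_axis using assms by (intro derivative_intros) auto

lemma differentiable_nth:
  fixes F :: "real^3 \<Rightarrow> real^3"
  assumes "F differentiable (at x)" shows "(\<lambda>x. F x $ i) differentiable (at x)"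
  using assms bounded_linear.has_derivative[OF bounded_linear_vec_nth] unfolding differentiable_def by blast

lemma pd3_linear_comp:
  assumes "bounded_linear L" "F differentiable (at x)"
  shows "pd3 (\<lambda>x. L (F x)) j x = L (pd3 F j x)"
proof -
  obtain F' where F: "(F has_derivative F') (at x)" using assms unfolding differentiable_def by blast
  show ?thesis unfolding pd3_has[OF F] pd3_has[OF bounded_linear.has_derivative[OF assms(1) F]] ..
qed

lemma differentiable_linear_comp:
  assumes "bounded_linear L" "F differentiable (at x)"
  shows "(\<lambda>x. L (F x)) differentiable (at x)"
  using assms bounded_linear.has_derivative unfolding differentiable_def by blast

lemma bl_cross_left: "bounded_linear (\<lambda>w. cross3 a w)"
  using bounded_bilinear.bounded_linear_right[OF bounded_bilinear_cross] .
lemma bl_inner_left: "bounded_linear (\<lambda>w::real^3. a \<bullet> w)"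
  by (rule bounded_linear_inner_right)

definition FSre' :: "real \<Rightarrow> real \<Rightarrow> real \<Rightarrow> real \<Rightarrow> real^3 \<Rightarrow> real^3 \<Rightarrow> real^3 \<Rightarrow> real^3 \<Rightarrow> real^3
     \<Rightarrow> real^3 \<Rightarrow> real^3 \<Rightarrow> real^3 \<Rightarrow> real^3" where
  "FSre' r \<tau> gam p0 \<xi> v hs Wv cA cW cH Hv =
     (r * \<tau>\<^sup>2) *\<^sub>R v - (gam * (\<xi> \<bullet> v) * p0) *\<^sub>R \<xi> + hs
     + cross3 (cA - cross3 \<xi> (cross3 \<xi> Wv)) Hv + cross3 cH cW"

definition FSim' :: "real \<Rightarrow> real^3 \<Rightarrow> real^3 \<Rightarrow> real^3 \<Rightarrow> real^3 \<Rightarrow> real^3 \<Rightarrow> real^3 \<Rightarrow> real^3 \<Rightarrow> real^3 \<Rightarrow> real^3" where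
  "FSim' gam gg \<xi> v Wv cB cW cH Hv =
     (gam * (\<xi> \<bullet> v)) *\<^sub>R gg + (v \<bullet> gg) *\<^sub>R \<xi>
     + cross3 (cB + cross3 \<xi> cW) Hv + cross3 cH (cross3 \<xi> Wv)"

definition FSre :: "(real^3 \<Rightarrow> real) \<Rightarrow> (real^3 \<Rightarrow> real) \<Rightarrow> (real^3 \<Rightarrow> real^3) \<Rightarrow> real
    \<Rightarrow> real^3 \<Rightarrow> real \<Rightarrow> real^3 \<Rightarrow> real^3 \<Rightarrow> real^3" where
  "FSre rho pr H gam x \<tau> \<xi> v = FSre' (rho x) \<tau> gam (pr x) \<xi> v
     (vector [v \<bullet> pd3 (grad3 pr) 1 x, v \<bullet> pd3 (grad3 pr) 2 x, v \<bullet> pd3 (grad3 pr) 3 x])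
     (cross3 v (H x)) (curl3 (curl3 (\<lambda>x. cross3 v (H x))) x) (curl3 (\<lambda>x. cross3 v (H x)) x) (curl3 H x) (H x)"

definition FSim :: "(real^3 \<Rightarrow> real) \<Rightarrow> (real^3 \<Rightarrow> real) \<Rightarrow> (real^3 \<Rightarrow> real^3) \<Rightarrow> real
    \<Rightarrow> real^3 \<Rightarrow> real \<Rightarrow> real^3 \<Rightarrow> real^3 \<Rightarrow> real^3" where
  "FSim rho pr H gam x \<tau> \<xi> v = FSim' gam (grad3 pr x) \<xi> v (cross3 v (H x))
     (curl3 (\<lambda>x. cross3 \<xi> (cross3 v (H x))) x) (curl3 (\<lambda>x. cross3 v (H x)) x) (curl3 H x) (H x)"

lemma pop_alg:
  fixes e :: complex and r \<tau> gam p0 g1 g2 g3 h1 h2 h3 :: real and \<xi> v gg Wv cA cB cW cH Hv :: "real^3"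
  assumes gg: "gg = vector [g1, g2, g3]"
  shows "- (complex_of_real r *s (e *s ((\<i> * complex_of_real \<tau>) *s ((\<i> * complex_of_real \<tau>) *s cvec v))))
   + complex_of_real gam *s (e *s vector [
       complex_of_real g1 * (\<i> * complex_of_real (\<xi> \<bullet> v)) + (\<i> * complex_of_real (\<xi> $ 1)) * (complex_of_real p0 * (\<i> * complex_of_real (\<xi> \<bullet> v))),
       complex_of_real g2 * (\<i> * complex_of_real (\<xi> \<bullet> v)) + (\<i> * complex_of_real (\<xi> $ 2)) * (complex_of_real p0 * (\<i> * complex_of_real (\<xi> \<bullet> v))),
       complex_of_real g3 * (\<i> * complex_of_real (\<xi> \<bullet> v)) + (\<i> * complex_of_real (\<xi> $ 3)) * (complex_of_real p0 * (\<i> * complex_of_real (\<xi> \<bullet> v)))])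
   + e *s vector [complex_of_real h1 + (\<i> * complex_of_real (\<xi> $ 1)) * complex_of_real (v \<bullet> gg),
                  complex_of_real h2 + (\<i> * complex_of_real (\<xi> $ 2)) * complex_of_real (v \<bullet> gg),
                  complex_of_real h3 + (\<i> * complex_of_real (\<xi> $ 3)) * complex_of_real (v \<bullet> gg)]
   + ccross (e *s (cvec cA + \<i> *s cvec cB + \<i> *s cvec (cross3 \<xi> cW) - cvec (cross3 \<xi> (cross3 \<xi> Wv)))) (cvec Hv)
   + ccross (cvec cH) (e *s (cvec cW + \<i> *s cvec (cross3 \<xi> Wv)))
   = e *s (cvec (FSre' r \<tau> gam p0 \<xi> v (vector [h1, h2, h3]) Wv cA cW cH Hv) + \<i> *s cvec (FSim' gam gg \<xi> v Wv cB cW cH Hv))"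
  unfolding gg FSre'_def FSim'_def
  by (simp add: vec_eq_iff forall_3 cvec_def ccross_def cross3_simps power2_eq_square algebra_simps)

lemma cvec_zero: "cvec 0 = 0"
  by (simp add: cvec_def vec_eq_iff)

lemma curl3_zero: "curl3 (\<lambda>x. 0) x = 0"
  by (simp add: curl3_def pd3_const vec_eq_iff forall_3)

lemma Pop_ee:
  fixes rho pr :: "real^3 \<Rightarrow> real" and H :: "real^3 \<Rightarrow> real^3" and v :: "real^3"
  assumes hH: "\<And>x. H differentiable (at x)" and hH2: "\<And>m. pd3 H m differentiable (at x)"
    and hp: "pr differentiable (at x)" and hp2: "\<And>m. pd3 pr m differentiable (at x)"
  shows "Pop rho pr H gam (\<lambda>y. ee \<tau> \<xi> y *s cvec v) (t, x) =
     ee \<tau> \<xi> (t, x) *s (cvec (FSre rho pr H gam x \<tau> \<xi> v) + \<i> *s cvec (FSim rho pr H gam x \<tau> \<xi> v))"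
proof -
  define w where "w = (t, x)"
  have sw: "snd w = x" unfolding w_def by simp
  let ?e = "ee \<tau> \<xi>"
  define W where "W = (\<lambda>x. cross3 v (H x))"
  have dt1: "dtm (\<lambda>y. ?e y *s cvec v) = (\<lambda>y. ?e y *s ((\<i> * complex_of_real \<tau>) *s cvec v))"
    using dtm_ee[of "\<lambda>_. cvec v"] by (auto intro!: ext)
  have dt2: "dtm (dtm (\<lambda>y. ?e y *s cvec v)) w = ?e w *s ((\<i> * complex_of_real \<tau>) *s ((\<i> * complex_of_real \<tau>) *s cvec v))"
    unfolding dt1 using dtm_ee[of "\<lambda>_. (\<i> * complex_of_real \<tau>) *s cvec v"] by auto
  have dsb: "dsp (\<lambda>y. ?e y *s cvec v) j y = ?e y *s ((\<i> * complex_of_real (\<xi> $ j)) *s cvec v)" for j y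
    using dsp_ee[of "\<lambda>_. cvec v"] by (simp add: pd3_const)
  have div: "Xdiv (\<lambda>y. ?e y *s cvec v) = (\<lambda>y. ?e y * (\<i> * complex_of_real (\<xi> \<bullet> v)))"
    unfolding Xdiv_def dsb by (auto intro!: ext simp: cvec_def inner_vec_def sum_3 algebra_simps)
  define f2 where "f2 = (\<lambda>x. complex_of_real (pr x) * (\<i> * complex_of_real (\<xi> \<bullet> v)))"
  have f2d: "f2 differentiable (at x)" unfolding f2_def using hp
    by (intro derivative_intros differentiable_ofreal)
  have pf2: "pd3 f2 j x = complex_of_real (pd3 pr j x) * (\<i> * complex_of_real (\<xi> \<bullet> v))" for j
    unfolding f2_def using pd3_linear_comp[OF bounded_linear_mult_left[of "\<i> * complex_of_real (\<xi> \<bullet> v)"] differentiable_ofreal[OF hp]]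
      pd3_ofreal[OF hp] by simp
  have T2: "Xgrad (\<lambda>y. complex_of_real (pr (snd y)) * Xdiv (\<lambda>y. ?e y *s cvec v) y) w =
     ?e w *s vector [pd3 f2 1 x + (\<i> * complex_of_real (\<xi> $ 1)) * f2 x, pd3 f2 2 x + (\<i> * complex_of_real (\<xi> $ 2)) * f2 x,
        pd3 f2 3 x + (\<i> * complex_of_real (\<xi> $ 3)) * f2 x]"
  proof -
    have "(\<lambda>y. complex_of_real (pr (snd y)) * Xdiv (\<lambda>y. ?e y *s cvec v) y) = (\<lambda>y. ?e y * f2 (snd y))"
      unfolding div f2_def by (auto intro!: ext simp: mult_ac)
    then show ?thesis unfolding Xgrad_def using dsp_ee_scalar[of f2 w] f2d sw by (simp add: vector3_smult)
  qed
  have g3d: "grad3 pr differentiable (at x)" unfolding grad3_def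
    using hp2 by (intro differentiable_vector3) auto
  define f3 where "f3 = (\<lambda>x. complex_of_real (v \<bullet> grad3 pr x))"
  have f3d: "f3 differentiable (at x)" unfolding f3_def
    by (intro differentiable_ofreal differentiable_linear_comp[OF bl_inner_left g3d])
  have pf3: "pd3 f3 j x = complex_of_real (v \<bullet> pd3 (grad3 pr) j x)" for j
    unfolding f3_def pd3_ofreal[OF differentiable_linear_comp[OF bl_inner_left g3d]]
      pd3_linear_comp[OF bl_inner_left g3d] ..
  have T3: "Xgrad (\<lambda>y. cdot (?e y *s cvec v) (cvec (grad3 pr (snd y)))) w =
     ?e w *s vector [pd3 f3 1 x + (\<i> * complex_of_real (\<xi> $ 1)) * f3 x, pd3 f3 2 x + (\<i> * complex_of_real (\<xi> $ 2)) * f3 x,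
        pd3 f3 3 x + (\<i> * complex_of_real (\<xi> $ 3)) * f3 x]"
  proof -
    have "(\<lambda>y. cdot (?e y *s cvec v) (cvec (grad3 pr (snd y)))) = (\<lambda>y. ?e y * f3 (snd y))"
      unfolding f3_def by (auto intro!: ext simp: cdot_smult_left cdot_cvec)
    then show ?thesis unfolding Xgrad_def using dsp_ee_scalar[of f3 w] f3d sw by (simp add: vector3_smult)
  qed
  have Wd: "W differentiable (at x')" for x' unfolding W_def by (rule differentiable_linear_comp[OF bl_cross_left hH])
  have pW: "pd3 W m x' = cross3 v (pd3 H m x')" for m x' unfolding W_def by (rule pd3_linear_comp[OF bl_cross_left hH])
  have bH: "(\<lambda>y. ccross (?e y *s cvec v) (cvec (H (snd y)))) = (\<lambda>y. ?e y *s (cvec (W (snd y)) + \<i> *s cvec ((\<lambda>x. 0) (snd y))))"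
    unfolding W_def by (auto intro!: ext simp: ccross_smult_left cross_cvec cvec_zero)
  have C1: "Xcurl (\<lambda>y. ccross (?e y *s cvec v) (cvec (H (snd y)))) =
     (\<lambda>y. ?e y *s (cvec (curl3 W (snd y)) + \<i> *s cvec (cross3 \<xi> (W (snd y)))))"
  proof (rule ext)
    fix y
    show "Xcurl (\<lambda>y. ccross (?e y *s cvec v) (cvec (H (snd y)))) y = ?e y *s (cvec (curl3 W (snd y)) + \<i> *s cvec (cross3 \<xi> (W (snd y))))"
      unfolding bH using Xcurl_ee[of W y "\<lambda>x. 0" \<tau> \<xi>] Wd by (simp add: curl3_zero cvec_def vec_eq_iff)
  qed
  define A2 where "A2 = curl3 W"
  define B2 where "B2 = (\<lambda>x. cross3 \<xi> (W x))"
  have A2eq: "A2 = (\<lambda>x. vector [cross3 v (pd3 H 2 x) $ 3 - cross3 v (pd3 H 3 x) $ 2,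
                                  cross3 v (pd3 H 3 x) $ 1 - cross3 v (pd3 H 1 x) $ 3,
                                  cross3 v (pd3 H 1 x) $ 2 - cross3 v (pd3 H 2 x) $ 1])"
    unfolding A2_def curl3_def pW ..
  have A2d: "A2 differentiable (at x)" unfolding A2eq
    using hH2 by (intro differentiable_vector3 derivative_intros differentiable_nth differentiable_linear_comp[OF bl_cross_left]) auto
  have B2d: "B2 differentiable (at x)" unfolding B2_def by (rule differentiable_linear_comp[OF bl_cross_left Wd])
  have C2: "Xcurl (Xcurl (\<lambda>y. ccross (?e y *s cvec v) (cvec (H (snd y))))) w =
     ?e w *s (cvec (curl3 A2 x) + \<i> *s cvec (curl3 B2 x) + \<i> *s cvec (cross3 \<xi> (A2 x)) - cvec (cross3 \<xi> (B2 x)))"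
    using Xcurl_ee[of A2 w B2 \<tau> \<xi>] A2d B2d sw unfolding C1 A2_def[symmetric] B2_def by simp
  have C3: "Xcurl (\<lambda>y. cvec (H (snd y))) w = cvec (curl3 H x)"
    unfolding Xcurl_def curl3_def using dsp_snd[of "\<lambda>x. cvec (H x)" w] differentiable_cvec[OF hH] pd3_cvec[OF hH] sw
    by (simp add: cvec_def vec_eq_iff forall_3)
  have C4: "Xcurl (\<lambda>y. ccross (?e y *s cvec v) (cvec (H (snd y)))) w = ?e w *s (cvec (curl3 W x) + \<i> *s cvec (cross3 \<xi> (W x)))"
    unfolding C1 sw ..
  show ?thesis
    unfolding Pop_def w_def[symmetric] dt2 T2 T3 C2 C3 C4 sw pf2 pf3 FSre_def FSim_def
    unfolding f2_def f3_def A2_def B2_def W_def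
    by (rule pop_alg) (simp add: grad3_def)
qed


lemma full_symbol_eq:
  fixes rho pr :: "real^3 \<Rightarrow> real" and H :: "real^3 \<Rightarrow> real^3"
  assumes hH: "\<And>x. H differentiable (at x)" and hH2: "\<And>m. pd3 H m differentiable (at x)"
    and hp: "pr differentiable (at x)" and hp2: "\<And>m. pd3 pr m differentiable (at x)"
  shows "full_symbol rho pr H gam (t, x, \<tau>, \<xi>) =
    (\<chi> i k. (cvec (FSre rho pr H gam x \<tau> \<xi> (axis k 1)) + \<i> *s cvec (FSim rho pr H gam x \<tau> \<xi> (axis k 1))) $ i)"
proof -
  have b: "(\<lambda>y. exp (\<i> * complex_of_real (fst y * \<tau> + snd y \<bullet> \<xi>)) *s cvec (axis k 1)) = (\<lambda>y. ee \<tau> \<xi> y *s cvec (axis k 1))" for k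
    unfolding ee_def ..
  have e: "exp (- \<i> * complex_of_real (t * \<tau> + x \<bullet> \<xi>)) * ee \<tau> \<xi> (t, x) = 1"
    unfolding ee_def by (simp add: exp_minus[symmetric] exp_add[symmetric])
  have fs: "full_symbol rho pr H gam (t, x, \<tau>, \<xi>) = (\<chi> i k. (exp (- \<i> * complex_of_real (t * \<tau> + x \<bullet> \<xi>)) *s
      Pop rho pr H gam (\<lambda>y. ee \<tau> \<xi> y *s cvec (axis k 1)) (t, x)) $ i)"
    unfolding full_symbol_def ee_def by simp
  show ?thesis unfolding fs Pop_ee[OF hH hH2 hp hp2] vector_smult_assoc e
    by simp
qed

lemma curl3_scale:
  assumes "F differentiable (at x)"
  shows "curl3 (\<lambda>x. s *\<^sub>R F x) x = s *\<^sub>R curl3 F x"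
proof -
  have "pd3 (\<lambda>x. s *\<^sub>R F x) m x = s *\<^sub>R pd3 F m x" for m
    using pd3_linear_comp[OF bounded_linear_scaleR_right assms] .
  then show ?thesis unfolding curl3_def by (simp add: vec_eq_iff forall_3 right_diff_distrib)
qed

lemma FSim_homog:
  assumes hH: "\<And>x. H differentiable (at x)"
  shows "FSim rho pr H gam x (s * \<tau>) (s *\<^sub>R \<xi>) v = s *\<^sub>R FSim rho pr H gam x \<tau> \<xi> v"
proof -
  have d: "(\<lambda>x. cross3 \<xi> (cross3 v (H x))) differentiable (at x)"
    by (intro differentiable_linear_comp[OF bl_cross_left] hH)
  have "curl3 (\<lambda>x. cross3 (s *\<^sub>R \<xi>) (cross3 v (H x))) x = s *\<^sub>R curl3 (\<lambda>x. cross3 \<xi> (cross3 v (H x))) x"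
    unfolding cross_mult_left by (rule curl3_scale[OF d])
  then show ?thesis unfolding FSim_def FSim'_def
    by (simp add: cross_mult_left cross_mult_right cross_add_left cross_add_right scaleR_add_right algebra_simps)
qed

definition FSre0 :: "(real^3 \<Rightarrow> real) \<Rightarrow> (real^3 \<Rightarrow> real) \<Rightarrow> (real^3 \<Rightarrow> real^3) \<Rightarrow> real
    \<Rightarrow> real^3 \<Rightarrow> real^3 \<Rightarrow> real^3" where
  "FSre0 rho pr H gam x v = FSre rho pr H gam x 0 0 v"

lemma FSre_split:
  "FSre rho pr H gam x \<tau> \<xi> v = FSre0 rho pr H gam x v + p2 rho pr H gam (t, x, \<tau>, \<xi>) *v v"
  unfolding FSre0_def FSre_def FSre'_def p2_def power2_norm_eq_inner
  by (simp add: inner_vec_def vec_eq_iff forall_3 cross3_simps tens_def mat_def matrix_vector_mult_def sum_3 power2_eq_square algebra_simps)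


lemma p2_homog: "p2 rho pr H gam (t, x, s * \<tau>, s *\<^sub>R \<xi>) = s\<^sup>2 *\<^sub>R p2 rho pr H gam (t, x, \<tau>, \<xi>)"
  unfolding p2_def by (simp add: tens_lin algebra_simps power2_eq_square)

lemma p1_eq:
  fixes rho pr :: "real^3 \<Rightarrow> real" and H :: "real^3 \<Rightarrow> real^3" and p1 p0 :: "pt \<Rightarrow> complex^3^3"
  assumes hH: "\<And>x. H differentiable (at x)" and hH2: "\<And>m. pd3 H m differentiable (at x)"
    and hp: "pr differentiable (at x)" and hp2: "\<And>m. pd3 pr m differentiable (at x)"
    and symbol: "\<forall>z. full_symbol rho pr H gam z = cmat (p2 rho pr H gam z) + p1 z + p0 z"
    and homog: "\<forall>t x \<tau> \<xi> s. s > 0 \<longrightarrow>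
        p1 (t, x, s * \<tau>, s *\<^sub>R \<xi>) = s *\<^sub>R p1 (t, x, \<tau>, \<xi>) \<and>
        p0 (t, x, s * \<tau>, s *\<^sub>R \<xi>) = p0 (t, x, \<tau>, \<xi>)"
  shows "p1 (t, x, \<tau>, \<xi>) = (\<chi> i k. \<i> * complex_of_real (FSim rho pr H gam x \<tau> \<xi> (axis k 1) $ i))"
proof -
  let ?z = "(t, x, \<tau>, \<xi>)" and ?z2 = "(t, x, 2 * \<tau>, (2::real) *\<^sub>R \<xi>)"
  note FS = full_symbol_eq[OF hH hH2 hp hp2]
  have h2: "p1 ?z2 = 2 *\<^sub>R p1 ?z" "p0 ?z2 = p0 ?z" using homog by auto
  have P2: "p2 rho pr H gam ?z2 = 4 *\<^sub>R p2 rho pr H gam ?z" using p2_homog[of rho pr H gam t x 2 \<tau> \<xi>] by simp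
  have FI: "FSim rho pr H gam x (2 * \<tau>) (2 *\<^sub>R \<xi>) v = 2 *\<^sub>R FSim rho pr H gam x \<tau> \<xi> v" for v
    using FSim_homog[OF hH] .
  have mv: "(M *v axis k 1) $ i = M $ i $ k" for M :: "real^3^3" and i k
    by (simp add: matrix_vector_mult_def axis_def if_distrib cong: if_cong)
  show ?thesis
  proof (subst vec_eq_iff, intro allI, subst vec_eq_iff, intro allI)
    fix i k
    let ?R0 = "complex_of_real (FSre0 rho pr H gam x (axis k 1) $ i)"
    let ?P = "complex_of_real (p2 rho pr H gam ?z $ i $ k)"
    let ?F = "complex_of_real (FSim rho pr H gam x \<tau> \<xi> (axis k 1) $ i)"
    have a1: "full_symbol rho pr H gam ?z $ i $ k = ?R0 + ?P + \<i> * ?F"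
      unfolding FS FSre_split[of _ _ _ _ _ \<tau> \<xi> _ t] by (simp add: cvec_def mv)
    have a2: "full_symbol rho pr H gam ?z2 $ i $ k = ?R0 + 4 * ?P + 2 * (\<i> * ?F)"
      unfolding FS FSre_split[of _ _ _ _ _ "2 * \<tau>" "2 *\<^sub>R \<xi>" _ t] FI P2 by (simp add: cvec_def mv)
    have b1: "full_symbol rho pr H gam ?z $ i $ k = ?P + p1 ?z $ i $ k + p0 ?z $ i $ k"
      using symbol by (simp add: cmat_def)
    have b2: "full_symbol rho pr H gam ?z2 $ i $ k = 4 * ?P + 2 * p1 ?z $ i $ k + p0 ?z $ i $ k"
    proof -
      have "full_symbol rho pr H gam ?z2 = cmat (p2 rho pr H gam ?z2) + p1 ?z2 + p0 ?z2" using symbol by blast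
      then have "full_symbol rho pr H gam ?z2 = cmat (4 *\<^sub>R p2 rho pr H gam ?z) + 2 *\<^sub>R p1 ?z + p0 ?z"
        unfolding h2 P2 .
      then show ?thesis by (simp add: cmat_def scaleR_conv_of_real)
    qed
    have "p1 ?z $ i $ k = (full_symbol rho pr H gam ?z2 $ i $ k - full_symbol rho pr H gam ?z $ i $ k) - 3 * ?P"
      unfolding b1 b2 by (simp add: algebra_simps)
    also have "\<dots> = \<i> * ?F" unfolding a1 a2 by (simp add: algebra_simps)
    finally show "p1 ?z $ i $ k = (\<chi> i k. \<i> * complex_of_real (FSim rho pr H gam x \<tau> \<xi> (axis k 1) $ i)) $ i $ k"
      by simp
  qed
qed


lemma has_derivative_tens [derivative_intros]:
  "(f has_derivative f') (at x within s) \<Longrightarrow> (g has_derivative g') (at x within s) \<Longrightarrow>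
   ((\<lambda>x. tens (f x) (g x)) has_derivative (\<lambda>h. tens (f x) (g' h) + tens (f' h) (g x))) (at x within s)"
  by (rule bounded_bilinear.FDERIV[OF bounded_bilinear_tens])

lemma p2_alt: "p2 rho pr H gam = (\<lambda>w.
     (rho (fst (snd w)) * (fst (snd (snd w)))\<^sup>2 - (H (fst (snd w)) \<bullet> snd (snd (snd w)))\<^sup>2) *\<^sub>R mat 1
     - (gam * pr (fst (snd w)) + H (fst (snd w)) \<bullet> H (fst (snd w))) *\<^sub>R tens (snd (snd (snd w))) (snd (snd (snd w)))
     + (H (fst (snd w)) \<bullet> snd (snd (snd w))) *\<^sub>R (tens (snd (snd (snd w))) (H (fst (snd w))) + tens (H (fst (snd w))) (snd (snd (snd w)))))"
  by (auto intro!: ext simp: p2_def power2_norm_eq_inner split: prod.splits)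

lemma comp_x:
  assumes "(f has_derivative Df) (at x)"
  shows "((\<lambda>w::pt. f (fst (snd w))) has_derivative (\<lambda>h. Df (fst (snd h)))) (at (t, x, \<tau>, \<xi>))"
proof -
  have g: "((\<lambda>w::pt. fst (snd w)) has_derivative (\<lambda>h. fst (snd h))) (at (t, x, \<tau>, \<xi>))"
    by (intro derivative_intros)
  show ?thesis using has_derivative_compose[OF g, of f Df] assms by simp
qed

lemma p2_has_derivative:
  assumes r: "(rho has_derivative Dr) (at x)" and p: "(pr has_derivative Dp) (at x)" and h: "(H has_derivative DH) (at x)"
  shows "(p2 rho pr H gam has_derivative (\<lambda>hh. case hh of (h1, hx, h\<tau>, h\<xi>) \<Rightarrow>
      (Dr hx * \<tau>\<^sup>2 + rho x * (2 * \<tau> * h\<tau>) - 2 * (H x \<bullet> \<xi>) * (DH hx \<bullet> \<xi> + H x \<bullet> h\<xi>)) *\<^sub>R mat 1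
      - (gam * Dp hx + 2 * (H x \<bullet> DH hx)) *\<^sub>R tens \<xi> \<xi>
      - (gam * pr x + H x \<bullet> H x) *\<^sub>R (tens h\<xi> \<xi> + tens \<xi> h\<xi>)
      + (DH hx \<bullet> \<xi> + H x \<bullet> h\<xi>) *\<^sub>R (tens \<xi> (H x) + tens (H x) \<xi>)
      + (H x \<bullet> \<xi>) *\<^sub>R (tens h\<xi> (H x) + tens \<xi> (DH hx) + tens (DH hx) \<xi> + tens (H x) h\<xi>))) (at (t, x, \<tau>, \<xi>))"
proof -
  have r': "((\<lambda>w. rho (fst (snd w))) has_derivative (\<lambda>h. Dr (fst (snd h)))) (at (t, x, \<tau>, \<xi>))"
    by (rule comp_x[OF r])
  have p': "((\<lambda>w. pr (fst (snd w))) has_derivative (\<lambda>h. Dp (fst (snd h)))) (at (t, x, \<tau>, \<xi>))"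
    by (rule comp_x[OF p])
  have h': "((\<lambda>w. H (fst (snd w))) has_derivative (\<lambda>h. DH (fst (snd h)))) (at (t, x, \<tau>, \<xi>))"
    by (rule comp_x[OF h])
  have lr: "linear Dr" "linear Dp" "linear DH" using r p h has_derivative_linear by blast+
  show ?thesis unfolding p2_alt
    apply (rule has_derivative_eq_rhs)
     apply ((rule r' p' h' derivative_intros)+)[1]
    apply (auto intro!: ext simp: split: prod.splits)
    apply (simp add: algebra_simps tens_lin inner_commute power2_eq_square scaleR_add_right scaleR_diff_right
        scaleR_add_left scaleR_diff_left)
    done
qed


definition Gxi :: "(real^3 \<Rightarrow> real) \<Rightarrow> (real^3 \<Rightarrow> real^3) \<Rightarrow> real \<Rightarrow> 3 \<Rightarrow> real^3 \<Rightarrow> real^3 \<Rightarrow> real^3^3" where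
  "Gxi pr H gam j x \<xi> = (- 2 * (H x \<bullet> \<xi>) * (H x $ j)) *\<^sub>R mat 1
     - (gam * pr x + H x \<bullet> H x) *\<^sub>R (tens (axis j 1) \<xi> + tens \<xi> (axis j 1))
     + (H x $ j) *\<^sub>R (tens \<xi> (H x) + tens (H x) \<xi>)
     + (H x \<bullet> \<xi>) *\<^sub>R (tens (axis j 1) (H x) + tens (H x) (axis j 1))"

lemma tens_zero [simp]: "tens 0 a = 0" "tens a 0 = 0"
  by (simp_all add: tens_def vec_eq_iff)

lemma dXi_p2:
  assumes r: "rho differentiable (at x)" and p: "pr differentiable (at x)" and h: "H differentiable (at x)"
  shows "dXi (p2 rho pr H gam) j (t, x, \<tau>, \<xi>) = Gxi pr H gam j x \<xi>"
proof -
  obtain Dr Dp DH where r: "(rho has_derivative Dr) (at x)" and p: "(pr has_derivative Dp) (at x)"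
    and h: "(H has_derivative DH) (at x)" using r p h unfolding differentiable_def by blast
  have l: "Dr 0 = 0" "Dp 0 = 0" "DH 0 = 0" using r p h has_derivative_linear linear_0 by blast+
  show ?thesis unfolding dXi_def dd_has[OF p2_has_derivative[OF r p h]] Gxi_def
    by (simp add: l inner_axis1 inner_commute[of _ "axis j 1"] tens_lin algebra_simps)
qed

lemma Gxi_has_derivative:
  fixes t \<tau> :: real
  assumes p: "(pr has_derivative Dp) (at x)" and h: "(H has_derivative DH) (at x)"
  shows "((\<lambda>w. Gxi pr H gam j (fst (snd w)) (snd (snd (snd w)))) has_derivative (\<lambda>hh. case hh of (h1, hx, h\<tau>, h\<xi>) \<Rightarrow>
      (- 2 * (DH hx \<bullet> \<xi> + H x \<bullet> h\<xi>) * (H x $ j) - 2 * (H x \<bullet> \<xi>) * (DH hx $ j)) *\<^sub>R mat 1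
     - (gam * Dp hx + 2 * (H x \<bullet> DH hx)) *\<^sub>R (tens (axis j 1) \<xi> + tens \<xi> (axis j 1))
     - (gam * pr x + H x \<bullet> H x) *\<^sub>R (tens (axis j 1) h\<xi> + tens h\<xi> (axis j 1))
     + (DH hx $ j) *\<^sub>R (tens \<xi> (H x) + tens (H x) \<xi>)
     + (H x $ j) *\<^sub>R (tens h\<xi> (H x) + tens \<xi> (DH hx) + tens (DH hx) \<xi> + tens (H x) h\<xi>)
     + (DH hx \<bullet> \<xi> + H x \<bullet> h\<xi>) *\<^sub>R (tens (axis j 1) (H x) + tens (H x) (axis j 1))
     + (H x \<bullet> \<xi>) *\<^sub>R (tens (axis j 1) (DH hx) + tens (DH hx) (axis j 1)))) (at (t, x, \<tau>, \<xi>))"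
proof -
  have p': "((\<lambda>w. pr (fst (snd w))) has_derivative (\<lambda>h. Dp (fst (snd h)))) (at (t, x, \<tau>, \<xi>))"
    by (rule comp_x[OF p])
  have h': "((\<lambda>w. H (fst (snd w))) has_derivative (\<lambda>h. DH (fst (snd h)))) (at (t, x, \<tau>, \<xi>))"
    by (rule comp_x[OF h])
  have hj: "((\<lambda>w. H (fst (snd w)) $ j) has_derivative (\<lambda>h. DH (fst (snd h)) $ j)) (at (t, x, \<tau>, \<xi>))"
    using bounded_linear.has_derivative[OF bounded_linear_vec_nth h'] .
  show ?thesis unfolding Gxi_def
    apply (rule has_derivative_eq_rhs)
     apply ((rule hj p' h' derivative_intros)+)[1]
    apply (auto intro!: ext simp: split: prod.splits)
    apply (simp add: algebra_simps tens_lin inner_commute scaleR_add_right scaleR_diff_right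
        scaleR_add_left scaleR_diff_left)
    done
qed

lemma dX_Gxi:
  assumes r: "\<And>x. rho differentiable (at x)" and p: "\<And>x. pr differentiable (at x)" and h: "\<And>x. H differentiable (at x)"
  shows "dX (\<lambda>w. dXi (p2 rho pr H gam) j w) j (t, x, \<tau>, \<xi>) =
      (- 2 * (pd3 H j x \<bullet> \<xi>) * (H x $ j) - 2 * (H x \<bullet> \<xi>) * (pd3 H j x $ j)) *\<^sub>R mat 1
     - (gam * pd3 pr j x + 2 * (H x \<bullet> pd3 H j x)) *\<^sub>R (tens (axis j 1) \<xi> + tens \<xi> (axis j 1))
     + (pd3 H j x $ j) *\<^sub>R (tens \<xi> (H x) + tens (H x) \<xi>)
     + (H x $ j) *\<^sub>R (tens \<xi> (pd3 H j x) + tens (pd3 H j x) \<xi>)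
     + (pd3 H j x \<bullet> \<xi>) *\<^sub>R (tens (axis j 1) (H x) + tens (H x) (axis j 1))
     + (H x \<bullet> \<xi>) *\<^sub>R (tens (axis j 1) (pd3 H j x) + tens (pd3 H j x) (axis j 1))"
proof -
  obtain Dp DH where p': "(pr has_derivative Dp) (at x)"
    and h': "(H has_derivative DH) (at x)" using p h unfolding differentiable_def by blast
  have fe: "(\<lambda>w. dXi (p2 rho pr H gam) j w) = (\<lambda>w. Gxi pr H gam j (fst (snd w)) (snd (snd (snd w))))"
  proof
    fix w :: pt
    obtain a b c d where w: "w = (a, b, c, d)" by (cases w) auto
    show "dXi (p2 rho pr H gam) j w = Gxi pr H gam j (fst (snd w)) (snd (snd (snd w)))"
      unfolding w using dXi_p2[OF r p h] by simp
  qed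
  have l: "DH 0 = 0" using h' has_derivative_linear linear_0 by blast
  show ?thesis unfolding fe dX_def dd_has[OF Gxi_has_derivative[OF p' h']]
    by (simp add: pd3_has[OF p'] pd3_has[OF h'] l)
qed

definition curlOf :: "(3 \<Rightarrow> real^3) \<Rightarrow> real^3" where
  "curlOf F = vector [F 2 $ 3 - F 3 $ 2, F 3 $ 1 - F 1 $ 3, F 1 $ 2 - F 2 $ 1]"

definition FSimA where
  "FSimA gam g \<xi> Hv D v = (gam * (\<xi> \<bullet> v)) *\<^sub>R g + (v \<bullet> g) *\<^sub>R \<xi>
     + cross3 (curlOf (\<lambda>m. cross3 \<xi> (cross3 v (D m))) + cross3 \<xi> (curlOf (\<lambda>m. cross3 v (D m)))) Hv
     + cross3 (curlOf D) (cross3 \<xi> (cross3 v Hv))"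

definition SxA where
  "SxA gam g \<xi> Hv D j = (- 2 * (D j \<bullet> \<xi>) * (Hv $ j) - 2 * (Hv \<bullet> \<xi>) * (D j $ j)) *\<^sub>R mat 1
     - (gam * g $ j + 2 * (Hv \<bullet> D j)) *\<^sub>R (tens (axis j 1) \<xi> + tens \<xi> (axis j 1))
     + (D j $ j) *\<^sub>R (tens \<xi> Hv + tens Hv \<xi>)
     + (Hv $ j) *\<^sub>R (tens \<xi> (D j) + tens (D j) \<xi>)
     + (D j \<bullet> \<xi>) *\<^sub>R (tens (axis j 1) Hv + tens Hv (axis j 1))
     + (Hv \<bullet> \<xi>) *\<^sub>R (tens (axis j 1) (D j) + tens (D j) (axis j 1))"

lemma antisym_core:
  assumes eq: "g = - cross3 Hv (curlOf D)"
  shows "FSimA gam g \<xi> Hv D (axis k 1) $ i + FSimA gam g \<xi> Hv D (axis i 1) $ k + (\<Sum>j\<in>UNIV. SxA gam g \<xi> Hv D j) $ i $ k = 0"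
  using exhaust_3[of i] exhaust_3[of k]
  unfolding eq FSimA_def SxA_def curlOf_def
  by (auto simp: sum_3 cross3_simps tens_def mat_def axis_def)


lemma FSim_A:
  assumes hH: "\<And>x. H differentiable (at x)"
  shows "FSim rho pr H gam x \<tau> \<xi> v = FSimA gam (grad3 pr x) \<xi> (H x) (\<lambda>m. pd3 H m x) v"
proof -
  have bl: "bounded_linear (\<lambda>w. cross3 \<xi> (cross3 v w))"
    using bounded_linear_compose[OF bl_cross_left bl_cross_left] by (simp add: o_def)
  have c1: "curl3 (\<lambda>x. cross3 \<xi> (cross3 v (H x))) x = curlOf (\<lambda>m. cross3 \<xi> (cross3 v (pd3 H m x)))"
    unfolding curl3_def curlOf_def pd3_linear_comp[OF bl hH] ..
  have c2: "curl3 (\<lambda>x. cross3 v (H x)) x = curlOf (\<lambda>m. cross3 v (pd3 H m x))"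
    unfolding curl3_def curlOf_def pd3_linear_comp[OF bl_cross_left hH] ..
  have c3: "curl3 H x = curlOf (\<lambda>m. pd3 H m x)" unfolding curl3_def curlOf_def ..
  show ?thesis unfolding FSim_def FSim'_def FSimA_def c1 c2 c3 ..
qed

lemma grad3_nth: "grad3 pr x $ j = pd3 pr j x"
  using exhaust_3[of j] by (auto simp: grad3_def)

lemma dX_Gxi_A:
  assumes r: "\<And>x. rho differentiable (at x)" and p: "\<And>x. pr differentiable (at x)" and h: "\<And>x. H differentiable (at x)"
  shows "dX (\<lambda>w. dXi (p2 rho pr H gam) j w) j (t, x, \<tau>, \<xi>) = SxA gam (grad3 pr x) \<xi> (H x) (\<lambda>m. pd3 H m x) j"
  unfolding dX_Gxi[OF r p h] SxA_def grad3_nth ..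

lemma subp_antisym:
  fixes rho pr :: "real^3 \<Rightarrow> real" and H :: "real^3 \<Rightarrow> real^3" and p1 p0 :: "pt \<Rightarrow> complex^3^3"
  assumes r: "\<And>x. rho differentiable (at x)" and p: "\<And>x. pr differentiable (at x)" and hH: "\<And>x. H differentiable (at x)"
    and hH2: "\<And>m. pd3 H m differentiable (at x)" and hp2: "\<And>m. pd3 pr m differentiable (at x)"
    and symbol: "\<forall>z. full_symbol rho pr H gam z = cmat (p2 rho pr H gam z) + p1 z + p0 z"
    and homog: "\<forall>t x \<tau> \<xi> s. s > 0 \<longrightarrow>
        p1 (t, x, s * \<tau>, s *\<^sub>R \<xi>) = s *\<^sub>R p1 (t, x, \<tau>, \<xi>) \<and>
        p0 (t, x, s * \<tau>, s *\<^sub>R \<xi>) = p0 (t, x, \<tau>, \<xi>)"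
    and eq: "grad3 pr x + cross3 (H x) (curl3 H x) = 0"
  shows "subprincipal rho pr H gam p1 (t, x, \<tau>, \<xi>) $ i $ k + subprincipal rho pr H gam p1 (t, x, \<tau>, \<xi>) $ k $ i = 0"
proof -
  let ?z = "(t, x, \<tau>, \<xi>)"
  note P1 = p1_eq[OF hH hH2 p hp2 symbol homog, of t \<tau> \<xi>]
  let ?g = "grad3 pr x" and ?D = "\<lambda>m. pd3 H m x"
  have eqA: "?g = - cross3 (H x) (curlOf ?D)"
    using eq unfolding curl3_def curlOf_def by (simp add: eq_neg_iff_add_eq_0)
  define S where "S = (\<Sum>j\<in>UNIV. SxA gam ?g \<xi> (H x) ?D j)"
  have Seq: "(\<Sum>j\<in>UNIV. dX (\<lambda>w. dXi (p2 rho pr H gam) j w) j ?z) = S"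
    unfolding S_def dX_Gxi_A[OF r p hH] ..
  have A1: "FSimA gam ?g \<xi> (H x) ?D (axis k 1) $ i + FSimA gam ?g \<xi> (H x) ?D (axis i 1) $ k + S $ i $ k = 0"
    unfolding S_def by (rule antisym_core[OF eqA])
  have A2: "FSimA gam ?g \<xi> (H x) ?D (axis i 1) $ k + FSimA gam ?g \<xi> (H x) ?D (axis k 1) $ i + S $ k $ i = 0"
    unfolding S_def by (rule antisym_core[OF eqA])
  have ea: "FSimA gam ?g \<xi> (H x) ?D (axis i 1) $ k = - S $ i $ k - FSimA gam ?g \<xi> (H x) ?D (axis k 1) $ i"
    using A1 by linarith
  have es: "S $ k $ i = S $ i $ k" using A1 A2 by linarith
  show ?thesis
    unfolding subprincipal_def Seq P1 FSim_A[OF hH]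
    by (simp add: cscale_def cmat_def field_simps ea es)
qed




lemma tr_add: "transpose ((A::'a::semiring_1^'n^'m) + B) = transpose A + transpose B"
  by (simp add: transpose_def vec_eq_iff)
lemma tr_diff: "transpose ((A::'a::ring_1^'n^'m) - B) = transpose A - transpose B"
  by (simp add: transpose_def vec_eq_iff)

lemma poisson_pair_alg:
  fixes Pj Pa Pb Dj Da Db Ej Ea Eb p2e p2f pte ptf :: "real^3^3"
    and qa qb dqje dqae dqbe dqjf dqaf dqbf :: real
  assumes jj: "Pj ** Pj = Pj" and aa: "Pa ** Pa = Pa" and bb: "Pb ** Pb = Pb"
    and ja: "Pj ** Pa = 0" and aj: "Pa ** Pj = 0" and jb: "Pj ** Pb = 0" and bj: "Pb ** Pj = 0"
    and ab: "Pa ** Pb = 0" and ba: "Pb ** Pa = 0"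
    and sI: "Pj + Pa + Pb = mat 1"
    and qa: "qa \<noteq> 0" and qb: "qb \<noteq> 0"
    and Djj: "Dj ** Pj + Pj ** Dj = Dj" and Daj: "Da ** Pj + Pa ** Dj = 0" and Dbj: "Db ** Pj + Pb ** Dj = 0"
    and Dja: "Dj ** Pa + Pj ** Da = 0" and Djb: "Dj ** Pb + Pj ** Db = 0"
    and Ejj: "Ej ** Pj + Pj ** Ej = Ej" and Eaj: "Ea ** Pj + Pa ** Ej = 0" and Ebj: "Eb ** Pj + Pb ** Ej = 0"
    and Eja: "Ej ** Pa + Pj ** Ea = 0" and Ejb: "Ej ** Pb + Pj ** Eb = 0"
    and p2e: "p2e = dqje *\<^sub>R Pj + dqae *\<^sub>R Pa + dqbe *\<^sub>R Pb + qa *\<^sub>R Da + qb *\<^sub>R Db"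
    and p2f: "p2f = dqjf *\<^sub>R Pj + dqaf *\<^sub>R Pa + dqbf *\<^sub>R Pb + qa *\<^sub>R Ea + qb *\<^sub>R Eb"
    and pte: "pte = Dj + (dqje / qa) *\<^sub>R Pa + (dqje / qb) *\<^sub>R Pb"
    and ptf: "ptf = Ej + (dqjf / qa) *\<^sub>R Pa + (dqjf / qb) *\<^sub>R Pb"
    and sD: "transpose Dj = Dj" and sE: "transpose Ej = Ej" and sa: "transpose Pa = Pa" and sb: "transpose Pb = Pb"
    and rank: "\<And>X. transpose X = - X \<Longrightarrow> Pj ** X ** Pj = 0"
  shows "(ptf ** p2e - pte ** p2f) ** Pj = 2 *\<^sub>R ((dqje *\<^sub>R Ej - dqjf *\<^sub>R Dj) ** Pj)"
proof -
  note dist = matrix_add_ldistrib mat_add_rdistrib mat_diff_ldistrib mat_diff_rdistrib mat_scaleR_right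
    scalar_matrix_assoc[symmetric] mat_neg_left mat_neg_right
  define Ne where "Ne = qa *\<^sub>R (Pa ** Dj) + qb *\<^sub>R (Pb ** Dj)"
  define Nf where "Nf = qa *\<^sub>R (Pa ** Ej) + qb *\<^sub>R (Pb ** Ej)"
  have Daj': "Da ** Pj = - (Pa ** Dj)" using Daj by (simp add: eq_neg_iff_add_eq_0)
  have Dbj': "Db ** Pj = - (Pb ** Dj)" using Dbj by (simp add: eq_neg_iff_add_eq_0)
  have Eaj': "Ea ** Pj = - (Pa ** Ej)" using Eaj by (simp add: eq_neg_iff_add_eq_0)
  have Ebj': "Eb ** Pj = - (Pb ** Ej)" using Ebj by (simp add: eq_neg_iff_add_eq_0)
  have L1e: "p2e ** Pj = dqje *\<^sub>R Pj - Ne"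
    unfolding p2e Ne_def by (simp add: dist jj aj bj Daj' Dbj')
  have L1f: "p2f ** Pj = dqjf *\<^sub>R Pj - Nf"
    unfolding p2f Nf_def by (simp add: dist jj aj bj Eaj' Ebj')
  have PaD: "Pa ** Dj ** Pj = Pa ** Dj"
  proof -
    have "Pa ** Dj = - (Da ** Pj)" using Daj' by simp
    then have "Pa ** Dj ** Pj = - (Da ** Pj ** Pj)" by (simp add: mat_neg_left)
    also have "\<dots> = - (Da ** Pj)" by (simp add: matrix_mul_assoc[symmetric] jj)
    finally show ?thesis using Daj' by simp
  qed
  have PbD: "Pb ** Dj ** Pj = Pb ** Dj"
  proof -
    have "Pb ** Dj ** Pj = - (Db ** Pj ** Pj)" using Dbj' by (simp add: mat_neg_left)
    also have "\<dots> = - (Db ** Pj)" by (simp add: matrix_mul_assoc[symmetric] jj)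
    finally show ?thesis using Dbj' by simp
  qed
  have PaE: "Pa ** Ej ** Pj = Pa ** Ej"
  proof -
    have "Pa ** Ej ** Pj = - (Ea ** Pj ** Pj)" using Eaj' by (simp add: mat_neg_left)
    also have "\<dots> = - (Ea ** Pj)" by (simp add: matrix_mul_assoc[symmetric] jj)
    finally show ?thesis using Eaj' by simp
  qed
  have PbE: "Pb ** Ej ** Pj = Pb ** Ej"
  proof -
    have "Pb ** Ej ** Pj = - (Eb ** Pj ** Pj)" using Ebj' by (simp add: mat_neg_left)
    also have "\<dots> = - (Eb ** Pj)" by (simp add: matrix_mul_assoc[symmetric] jj)
    finally show ?thesis using Ebj' by simp
  qed
  have NeP: "Ne ** Pj = Ne" unfolding Ne_def by (simp add: dist PaD PbD)
  have NfP: "Nf ** Pj = Nf" unfolding Nf_def by (simp add: dist PaE PbE)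
  have PaNe: "Pa ** Ne = qa *\<^sub>R (Pa ** Dj)" unfolding Ne_def
    by (simp add: dist matrix_mul_assoc aa ab)
  have PbNe: "Pb ** Ne = qb *\<^sub>R (Pb ** Dj)" unfolding Ne_def
    by (simp add: dist matrix_mul_assoc bb ba)
  have PaNf: "Pa ** Nf = qa *\<^sub>R (Pa ** Ej)" unfolding Nf_def
    by (simp add: dist matrix_mul_assoc aa ab)
  have PbNf: "Pb ** Nf = qb *\<^sub>R (Pb ** Ej)" unfolding Nf_def
    by (simp add: dist matrix_mul_assoc bb ba)
  have sab: "Pa + Pb = mat 1 - Pj" using sI by (simp add: algebra_simps)
  have DjP: "(Pa + Pb) ** Dj = Dj ** Pj" unfolding sab using Djj by (simp add: dist algebra_simps)
  have EjP: "(Pa + Pb) ** Ej = Ej ** Pj" unfolding sab using Ejj by (simp add: dist algebra_simps)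
  have L2f: "ptf ** (p2e ** Pj) = dqje *\<^sub>R (Ej ** Pj) - dqjf *\<^sub>R (Dj ** Pj) - Ej ** Ne"
  proof -
    have "ptf ** (p2e ** Pj) = dqje *\<^sub>R (Ej ** Pj) - Ej ** Ne - (dqjf / qa) *\<^sub>R (Pa ** Ne) - (dqjf / qb) *\<^sub>R (Pb ** Ne)"
      unfolding L1e ptf by (simp add: dist aj bj algebra_simps)
    also have "\<dots> = dqje *\<^sub>R (Ej ** Pj) - Ej ** Ne - dqjf *\<^sub>R ((Pa + Pb) ** Dj)"
      unfolding PaNe PbNe using qa qb by (simp add: dist algebra_simps)
    finally show ?thesis unfolding DjP by (simp add: algebra_simps)
  qed
  have L2e: "pte ** (p2f ** Pj) = dqjf *\<^sub>R (Dj ** Pj) - dqje *\<^sub>R (Ej ** Pj) - Dj ** Nf"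
  proof -
    have "pte ** (p2f ** Pj) = dqjf *\<^sub>R (Dj ** Pj) - Dj ** Nf - (dqje / qa) *\<^sub>R (Pa ** Nf) - (dqje / qb) *\<^sub>R (Pb ** Nf)"
      unfolding L1f pte by (simp add: dist aj bj algebra_simps)
    also have "\<dots> = dqjf *\<^sub>R (Dj ** Pj) - Dj ** Nf - dqje *\<^sub>R ((Pa + Pb) ** Ej)"
      unfolding PaNf PbNf using qa qb by (simp add: dist algebra_simps)
    finally show ?thesis unfolding EjP by (simp add: algebra_simps)
  qed
  define Y where "Y = Ej ** Ne - Dj ** Nf"
  have YP: "Y ** Pj = Y" unfolding Y_def by (simp add: dist matrix_mul_assoc[symmetric] NeP NfP)
  have PjEa: "Pj ** (Ej ** Pa) = Ej ** Pa"
  proof -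
    have e: "Ej ** Pa = - (Pj ** Ea)" using Eja by (simp add: eq_neg_iff_add_eq_0)
    show ?thesis unfolding e by (simp add: dist matrix_mul_assoc jj)
  qed
  have PjEb: "Pj ** (Ej ** Pb) = Ej ** Pb"
  proof -
    have e: "Ej ** Pb = - (Pj ** Eb)" using Ejb by (simp add: eq_neg_iff_add_eq_0)
    show ?thesis unfolding e by (simp add: dist matrix_mul_assoc jj)
  qed
  have PjDa: "Pj ** (Dj ** Pa) = Dj ** Pa"
  proof -
    have e: "Dj ** Pa = - (Pj ** Da)" using Dja by (simp add: eq_neg_iff_add_eq_0)
    show ?thesis unfolding e by (simp add: dist matrix_mul_assoc jj)
  qed
  have PjDb: "Pj ** (Dj ** Pb) = Dj ** Pb"
  proof -
    have e: "Dj ** Pb = - (Pj ** Db)" using Djb by (simp add: eq_neg_iff_add_eq_0)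
    show ?thesis unfolding e by (simp add: dist matrix_mul_assoc jj)
  qed
  have PY: "Pj ** Y = Y"
  proof -
    have "Pj ** Y = qa *\<^sub>R ((Pj ** (Ej ** Pa)) ** Dj) + qb *\<^sub>R ((Pj ** (Ej ** Pb)) ** Dj)
        - qa *\<^sub>R ((Pj ** (Dj ** Pa)) ** Ej) - qb *\<^sub>R ((Pj ** (Dj ** Pb)) ** Ej)"
      unfolding Y_def Ne_def Nf_def by (simp add: dist matrix_mul_assoc)
    also have "\<dots> = Y" unfolding PjEa PjEb PjDa PjDb Y_def Ne_def Nf_def by (simp add: dist matrix_mul_assoc)
    finally show ?thesis .
  qed
  have tY: "transpose Y = - Y"
    unfolding Y_def Ne_def Nf_def
    by (simp add: dist tr_add tr_diff matrix_transpose_mul transpose_scalar sD sE sa sb matrix_mul_assoc algebra_simps)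
  have Y0: "Y = 0"
  proof -
    have "Y = Pj ** Y ** Pj" using PY YP by simp
    also have "\<dots> = 0" by (rule rank[OF tY])
    finally show ?thesis .
  qed
  have "(ptf ** p2e - pte ** p2f) ** Pj = ptf ** (p2e ** Pj) - pte ** (p2f ** Pj)"
    by (simp add: dist matrix_mul_assoc)
  also have "\<dots> = (dqje *\<^sub>R (Ej ** Pj) - dqjf *\<^sub>R (Dj ** Pj)) + (dqje *\<^sub>R (Ej ** Pj) - dqjf *\<^sub>R (Dj ** Pj)) - Y"
    unfolding L2f L2e Y_def by (simp add: algebra_simps)
  also have "\<dots> = 2 *\<^sub>R ((dqje *\<^sub>R Ej - dqjf *\<^sub>R Dj) ** Pj)" unfolding Y0 scaleR_2
    by (simp add: dist)
  finally show ?thesis .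
qed


lemma dproj:
  assumes "f differentiable (at x)"
  shows "(\<lambda>w::pt. f (fst (snd w))) differentiable (at (t, x, \<tau>, \<xi>))"
  using assms comp_x unfolding differentiable_def by blast

lemma dxi: "(\<lambda>w::pt. snd (snd (snd w))) differentiable (at z)"
  by (intro derivative_intros)
lemma dtau: "(\<lambda>w::pt. fst (snd (snd w))) differentiable (at z)"
  by (intro derivative_intros)

lemma fs_differentiable:
  fixes rho pr :: "real^3 \<Rightarrow> real" and H :: "real^3 \<Rightarrow> real^3"
  assumes r: "rho differentiable (at x)" and p: "pr differentiable (at x)" and h: "H differentiable (at x)"
    and g: "goodpt rho pr H gam (t, x, \<tau>, \<xi>)"
  shows "(\<lambda>w::pt. fast_slow b rho pr H gam (fst (snd w)) (snd (snd (snd w)))) differentiable (at (t, x, \<tau>, \<xi>))"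
proof -
  have r0: "rho x > 0" and c: "csq rho pr gam x > 0" and cr: "cross3 \<xi> (H x) \<noteq> 0"
    using g unfolding goodpt_def by auto
  have xi: "\<xi> \<noteq> 0" using cr by auto
  note R = dproj[OF r, of t \<tau> \<xi>] and P = dproj[OF p, of t \<tau> \<xi>] and HH = dproj[OF h, of t \<tau> \<xi>]
  note XI = dxi[of "(t, x, \<tau>, \<xi>)"]
  define c2 where "c2 = (\<lambda>w::pt. gam * pr (fst (snd w)) / rho (fst (snd w)))"
  define h2 where "h2 = (\<lambda>w::pt. (H (fst (snd w)) \<bullet> H (fst (snd w))) / rho (fst (snd w)))"
  define b2 where "b2 = (\<lambda>w::pt. (cross3 (snd (snd (snd w))) (H (fst (snd w))) \<bullet> cross3 (snd (snd (snd w))) (H (fst (snd w)))) / rho (fst (snd w)))"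
  define n2 where "n2 = (\<lambda>w::pt. snd (snd (snd w)) \<bullet> snd (snd (snd w)))"
  define D where "D = (\<lambda>w. (c2 w - h2 w)\<^sup>2 * (n2 w)\<^sup>2 + 4 * b2 w * c2 w * n2 w)"
  have fe: "(\<lambda>w::pt. fast_slow b rho pr H gam (fst (snd w)) (snd (snd (snd w))))
      = (\<lambda>w. (1/2) * ((c2 w + h2 w) * n2 w + (if b then sqrt (D w) else - sqrt (D w))))"
    unfolding fast_slow_def Let_def c2_def h2_def b2_def n2_def D_def csq_def power2_norm_eq_inner by simp
  have dc2: "c2 differentiable (at (t, x, \<tau>, \<xi>))" unfolding c2_def
    using R P r0 by (intro differentiable_divide differentiable_mult) auto
  have dh2: "h2 differentiable (at (t, x, \<tau>, \<xi>))" unfolding h2_def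
    using R HH r0 by (intro differentiable_divide differentiable_inner') auto
  have db2: "b2 differentiable (at (t, x, \<tau>, \<xi>))" unfolding b2_def
    using R HH XI r0 by (intro differentiable_divide differentiable_inner' differentiable_cross) auto
  have dn2: "n2 differentiable (at (t, x, \<tau>, \<xi>))" unfolding n2_def
    using XI by (intro differentiable_inner') auto
  have dD: "D differentiable (at (t, x, \<tau>, \<xi>))" unfolding D_def
    using dc2 dh2 db2 dn2 by (intro derivative_intros) auto
  have Dpos: "D (t, x, \<tau>, \<xi>) > 0"
  proof -
    have "c2 (t, x, \<tau>, \<xi>) > 0" using c unfolding c2_def csq_def by simp
    moreover have "b2 (t, x, \<tau>, \<xi>) > 0" using cr r0 unfolding b2_def by (simp add: inner_gt_zero_iff)
    moreover have "n2 (t, x, \<tau>, \<xi>) > 0" using xi unfolding n2_def by (simp add: inner_gt_zero_iff)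
    ultimately show ?thesis unfolding D_def by (simp add: add_nonneg_pos)
  qed
  have dS: "(\<lambda>w. sqrt (D w)) differentiable (at (t, x, \<tau>, \<xi>))" by (rule differentiable_sqrt_pos[OF dD Dpos])
  show ?thesis unfolding fe using dc2 dh2 dn2 dS by (cases b) (auto intro!: derivative_intros)
qed


lemma nondeg:
  assumes g: "goodpt rho pr H gam (t, x, \<tau>, \<xi>)"
  shows "rho x * cs2 rho pr H gam x \<xi> - rho x * cf2 rho pr H gam x \<xi> \<noteq> 0"
    "rho x * cs2 rho pr H gam x \<xi> - (H x \<bullet> \<xi>)\<^sup>2 \<noteq> 0"
    "rho x * cf2 rho pr H gam x \<xi> - (H x \<bullet> \<xi>)\<^sup>2 \<noteq> 0"
    "(H x \<bullet> \<xi>)\<^sup>2 - (norm (H x))\<^sup>2 * (norm \<xi>)\<^sup>2 \<noteq> 0"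
proof -
  have r: "rho x > 0" and c: "csq rho pr gam x > 0" and hx0: "\<xi> \<bullet> H x \<noteq> 0" and cr: "cross3 \<xi> (H x) \<noteq> 0"
    using g unfolding goodpt_def by auto
  have hx: "H x \<bullet> \<xi> \<noteq> 0" using hx0 by (simp add: inner_commute)
  note SF = scal_facts[of rho x pr gam \<xi> H, OF r c cr]
  have xi: "\<xi> \<noteq> 0" using cr by auto
  have n2: "(norm \<xi>)\<^sup>2 > 0" using xi by simp
  have bb: "(norm (cross3 \<xi> (H x)))\<^sup>2 > 0" using cr by simp
  note E = eig_scalar[OF refl SF(1) SF(2) SF(4) bb n2 hx SF(3)]
  show "rho x * cs2 rho pr H gam x \<xi> - rho x * cf2 rho pr H gam x \<xi> \<noteq> 0" using SF(3) by simp
  show "rho x * cs2 rho pr H gam x \<xi> - (H x \<bullet> \<xi>)\<^sup>2 \<noteq> 0" using E(2) .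
  show "rho x * cf2 rho pr H gam x \<xi> - (H x \<bullet> \<xi>)\<^sup>2 \<noteq> 0" using E(1) bb hx by auto
  show "(H x \<bullet> \<xi>)\<^sup>2 - (norm (H x))\<^sup>2 * (norm \<xi>)\<^sup>2 \<noteq> 0" using SF(4) bb by (smt (verit) mult.commute)
qed

lemma differentiable_w2:
  assumes "(\<lambda>w::pt. H (fst (snd w))) differentiable (at z)"
  shows "(\<lambda>w::pt. w2 H (fst (snd w)) (snd (snd (snd w)))) differentiable (at z)"
  unfolding w2_def power2_norm_eq_inner using assms dxi[of z]
  by (intro derivative_intros differentiable_tens differentiable_inner') auto

lemma ppi_qq_differentiable:
  fixes rho pr :: "real^3 \<Rightarrow> real" and H :: "real^3 \<Rightarrow> real^3"
  assumes r: "rho differentiable (at x)" and p: "pr differentiable (at x)" and h: "H differentiable (at x)"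
    and g: "goodpt rho pr H gam (t, x, \<tau>, \<xi>)" and k: "k \<in> {1,2,3::nat}"
  shows "ppi rho pr H gam k differentiable (at (t, x, \<tau>, \<xi>))" "qq rho pr H gam k differentiable (at (t, x, \<tau>, \<xi>))"
proof -
  note R = dproj[OF r, of t \<tau> \<xi>] and P = dproj[OF p, of t \<tau> \<xi>] and HH = dproj[OF h, of t \<tau> \<xi>]
  note XI = dxi[of "(t, x, \<tau>, \<xi>)"] and TAU = dtau[of "(t, x, \<tau>, \<xi>)"]
  note FS = fs_differentiable[OF r p h g]
  note ND = nondeg[OF g]
  note W = differentiable_w2[OF HH]
  show "qq rho pr H gam k differentiable (at (t, x, \<tau>, \<xi>))"
  proof -
    have qe: "qq rho pr H gam k = (\<lambda>w. if k = 1 then rho (fst (snd w)) * (fst (snd (snd w)))\<^sup>2 - (H (fst (snd w)) \<bullet> snd (snd (snd w)))\<^sup>2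
      else if k = 2 then rho (fst (snd w)) * ((fst (snd (snd w)))\<^sup>2 - cs2 rho pr H gam (fst (snd w)) (snd (snd (snd w))))
      else rho (fst (snd w)) * ((fst (snd (snd w)))\<^sup>2 - cf2 rho pr H gam (fst (snd w)) (snd (snd (snd w)))))"
      by (auto intro!: ext simp: qq_def split: prod.splits)
    show ?thesis unfolding qe using k R HH XI TAU FS[of True] FS[of False]
      by (auto intro!: derivative_intros differentiable_inner')
  qed
  show "ppi rho pr H gam k differentiable (at (t, x, \<tau>, \<xi>))"
  proof -
    define hx where "hx = (\<lambda>w::pt. H (fst (snd w)) \<bullet> snd (snd (snd w)))"
    define cs where "cs = (\<lambda>w::pt. rho (fst (snd w)) * cs2 rho pr H gam (fst (snd w)) (snd (snd (snd w))))"
    define cf where "cf = (\<lambda>w::pt. rho (fst (snd w)) * cf2 rho pr H gam (fst (snd w)) (snd (snd (snd w))))"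
    define B where "B = (\<lambda>w::pt. (gam * pr (fst (snd w)) + H (fst (snd w)) \<bullet> H (fst (snd w))) *\<^sub>R tens (snd (snd (snd w))) (snd (snd (snd w)))
                      - hx w *\<^sub>R (tens (snd (snd (snd w))) (H (fst (snd w))) + tens (H (fst (snd w))) (snd (snd (snd w)))))"
    define W2 where "W2 = (\<lambda>w::pt. w2 H (fst (snd w)) (snd (snd (snd w))))"
    have dhx: "hx differentiable (at (t, x, \<tau>, \<xi>))" unfolding hx_def using HH XI by (intro differentiable_inner')
    have dcs: "cs differentiable (at (t, x, \<tau>, \<xi>))" unfolding cs_def using R FS[of False] by (intro derivative_intros)
    have dcf: "cf differentiable (at (t, x, \<tau>, \<xi>))" unfolding cf_def using R FS[of True] by (intro derivative_intros)
    have dB: "B differentiable (at (t, x, \<tau>, \<xi>))" unfolding B_def using P HH XI dhx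
      by (intro derivative_intros differentiable_tens differentiable_inner') auto
    have dW: "W2 differentiable (at (t, x, \<tau>, \<xi>))" unfolding W2_def by (rule W)
    have pe: "ppi rho pr H gam k = (\<lambda>w. if k = 1 then mat 1 + (1 / ((hx w)\<^sup>2 - (H (fst (snd w)) \<bullet> H (fst (snd w))) * (snd (snd (snd w)) \<bullet> snd (snd (snd w))))) *\<^sub>R W2 w
       else if k = 2 then (1 / (cs w - cf w)) *\<^sub>R (B w + ((hx w)\<^sup>2 / (cs w - (hx w)\<^sup>2)) *\<^sub>R W2 w)
       else (1 / (cf w - cs w)) *\<^sub>R (B w + ((hx w)\<^sup>2 / (cf w - (hx w)\<^sup>2)) *\<^sub>R W2 w))"
    proof
      fix w :: pt
      obtain a b c d where w: "w = (a, b, c, d)" by (cases w) auto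
      show "ppi rho pr H gam k w = (if k = 1 then mat 1 + (1 / ((hx w)\<^sup>2 - (H (fst (snd w)) \<bullet> H (fst (snd w))) * (snd (snd (snd w)) \<bullet> snd (snd (snd w))))) *\<^sub>R W2 w
       else if k = 2 then (1 / (cs w - cf w)) *\<^sub>R (B w + ((hx w)\<^sup>2 / (cs w - (hx w)\<^sup>2)) *\<^sub>R W2 w)
       else (1 / (cf w - cs w)) *\<^sub>R (B w + ((hx w)\<^sup>2 / (cf w - (hx w)\<^sup>2)) *\<^sub>R W2 w))"
        unfolding w hx_def cs_def cf_def B_def W2_def ppi_def Let_def power2_norm_eq_inner by simp
    qed
    have n1: "(hx (t, x, \<tau>, \<xi>))\<^sup>2 - (H x \<bullet> H x) * (\<xi> \<bullet> \<xi>) \<noteq> 0" using ND(4) unfolding hx_def power2_norm_eq_inner by simp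
    have n2: "cs (t, x, \<tau>, \<xi>) - cf (t, x, \<tau>, \<xi>) \<noteq> 0" "cf (t, x, \<tau>, \<xi>) - cs (t, x, \<tau>, \<xi>) \<noteq> 0"
      using ND(1) unfolding cs_def cf_def by auto
    have n3: "cs (t, x, \<tau>, \<xi>) - (hx (t, x, \<tau>, \<xi>))\<^sup>2 \<noteq> 0" "cf (t, x, \<tau>, \<xi>) - (hx (t, x, \<tau>, \<xi>))\<^sup>2 \<noteq> 0"
      using ND(2,3) unfolding cs_def cf_def hx_def by auto
    consider "k = 1" | "k = 2" | "k = 3" using k by auto
    then show ?thesis
    proof cases
      case 1
      show ?thesis unfolding pe using 1 dhx HH XI dW n1
        by (auto intro!: derivative_intros differentiable_inner')
    next
      case 2
      show ?thesis unfolding pe using 2 dhx dcs dcf dB dW n2 n3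
        by (auto intro!: derivative_intros)
    next
      case 3
      show ?thesis unfolding pe using 3 dhx dcs dcf dB dW n2 n3
        by (auto intro!: derivative_intros)
    qed
  qed
qed


lemma deriv_local_eq:
  assumes "open U" "z \<in> U" "\<And>w. w \<in> U \<Longrightarrow> f w = g w" "f differentiable (at z)" "g differentiable (at z)"
  shows "frechet_derivative f (at z) = frechet_derivative g (at z)"
proof -
  have "(f has_derivative frechet_derivative g (at z)) (at z)"
    using has_derivative_local[OF assms(1,2), of f g] assms(3) frechet_derivative_works assms(5) by blast
  then show ?thesis using frechet_derivative_at by metis
qed

lemma fd_mmult:
  fixes f g :: "pt \<Rightarrow> real^3^3"
  assumes "f differentiable (at z)" "g differentiable (at z)"
  shows "frechet_derivative (\<lambda>w. f w ** g w) (at z) = (\<lambda>h. f z ** frechet_derivative g (at z) h + frechet_derivative f (at z) h ** g z)"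
  using frechet_derivative_at[OF bounded_bilinear.FDERIV[OF bounded_bilinear_mmult
      assms(1)[unfolded frechet_derivative_works] assms(2)[unfolded frechet_derivative_works]]] by simp

lemma fd_scaleR:
  fixes f :: "pt \<Rightarrow> real^3^3" and c :: "pt \<Rightarrow> real"
  assumes "c differentiable (at z)" "f differentiable (at z)"
  shows "frechet_derivative (\<lambda>w. c w *\<^sub>R f w) (at z) = (\<lambda>h. c z *\<^sub>R frechet_derivative f (at z) h + frechet_derivative c (at z) h *\<^sub>R f z)"
  using frechet_derivative_at[OF bounded_bilinear.FDERIV[OF bounded_bilinear_scaleR
      assms(1)[unfolded frechet_derivative_works] assms(2)[unfolded frechet_derivative_works]]] by simp

lemma fd_add:
  fixes f g :: "pt \<Rightarrow> 'b::real_normed_vector"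
  assumes "f differentiable (at z)" "g differentiable (at z)"
  shows "frechet_derivative (\<lambda>w. f w + g w) (at z) = (\<lambda>h. frechet_derivative f (at z) h + frechet_derivative g (at z) h)"
  using frechet_derivative_at[OF has_derivative_add[OF
      assms(1)[unfolded frechet_derivative_works] assms(2)[unfolded frechet_derivative_works]]] by simp

lemma fd_zero: "frechet_derivative (\<lambda>w. 0) (at z) = (\<lambda>h. 0)"
  using frechet_derivative_at[OF has_derivative_const[of 0 "at z"]] by simp

lemma bounded_linear_transpose: "bounded_linear (transpose :: real^3^3 \<Rightarrow> real^3^3)"
proof -
  have "linear (transpose :: real^3^3 \<Rightarrow> real^3^3)"
    by (auto intro!: linearI simp: tr_add transpose_scalar)
  then show ?thesis using linear_conv_bounded_linear by blast
qed

lemma fd_transpose: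
  fixes f :: "pt \<Rightarrow> real^3^3"
  assumes "f differentiable (at z)"
  shows "frechet_derivative (\<lambda>w. transpose (f w)) (at z) = (\<lambda>h. transpose (frechet_derivative f (at z) h))"
  using frechet_derivative_at[OF bounded_linear.has_derivative[OF bounded_linear_transpose
      assms(1)[unfolded frechet_derivative_works]]] by simp

lemma fd_differentiable_mmult:
  fixes f g :: "pt \<Rightarrow> real^3^3"
  shows "f differentiable (at z) \<Longrightarrow> g differentiable (at z) \<Longrightarrow> (\<lambda>w. f w ** g w) differentiable (at z)"
  by (rule differentiable_mmult)

lemma open_adm:
  assumes h: "\<And>x. H differentiable (at x)"
  shows "open {w::pt. admissible H w}"
proof -
  have cH: "continuous_on UNIV H" using h differentiable_imp_continuous_within continuous_on_eq_continuous_within by blast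
  have cHw: "continuous_on UNIV (\<lambda>w::pt. H (fst (snd w)))"
    by (intro continuous_on_compose2[OF cH] continuous_intros) auto
  have cxi: "continuous_on UNIV (\<lambda>w::pt. snd (snd (snd w)))" by (intro continuous_intros)
  have e: "{w::pt. admissible H w} = {w. snd (snd (snd w)) \<bullet> H (fst (snd w)) \<noteq> 0} \<inter> {w. cross3 (snd (snd (snd w))) (H (fst (snd w))) \<noteq> 0}"
    by (auto simp: admissible_def split: prod.splits)
  show ?thesis unfolding e
    by (intro open_Int open_Collect_neq continuous_intros continuous_on_cross cHw cxi)
qed


lemma goodpt_adm:
  assumes "\<forall>x. rho x > 0" "\<forall>x. csq rho pr gam x > 0" "admissible H w"
  shows "goodpt rho pr H gam w"
  using assms by (auto simp: goodpt_def admissible_def split: prod.splits)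

lemma deriv_facts:
  fixes rho pr :: "real^3 \<Rightarrow> real" and H :: "real^3 \<Rightarrow> real^3"
  assumes r: "\<And>x. rho differentiable (at x)" and p: "\<And>x. pr differentiable (at x)" and h: "\<And>x. H differentiable (at x)"
    and rpos: "\<forall>x. rho x > 0" and cpos: "\<forall>x. csq rho pr gam x > 0" and adm: "admissible H (t, x, \<tau>, \<xi>)"
  shows "\<And>k l. k \<in> {1,2,3} \<Longrightarrow> l \<in> {1,2,3} \<Longrightarrow>
      frechet_derivative (ppi rho pr H gam k) (at (t, x, \<tau>, \<xi>)) hh ** ppi rho pr H gam l (t, x, \<tau>, \<xi>)
      + ppi rho pr H gam k (t, x, \<tau>, \<xi>) ** frechet_derivative (ppi rho pr H gam l) (at (t, x, \<tau>, \<xi>)) hh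
      = (if k = l then frechet_derivative (ppi rho pr H gam l) (at (t, x, \<tau>, \<xi>)) hh else 0)"
    "\<And>k. k \<in> {1,2,3} \<Longrightarrow> transpose (frechet_derivative (ppi rho pr H gam k) (at (t, x, \<tau>, \<xi>)) hh)
       = frechet_derivative (ppi rho pr H gam k) (at (t, x, \<tau>, \<xi>)) hh"
    "frechet_derivative (p2 rho pr H gam) (at (t, x, \<tau>, \<xi>)) hh =
       (\<Sum>l\<in>{1,2,3}. frechet_derivative (qq rho pr H gam l) (at (t, x, \<tau>, \<xi>)) hh *\<^sub>R ppi rho pr H gam l (t, x, \<tau>, \<xi>)
          + qq rho pr H gam l (t, x, \<tau>, \<xi>) *\<^sub>R frechet_derivative (ppi rho pr H gam l) (at (t, x, \<tau>, \<xi>)) hh)"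
proof -
  let ?z = "(t, x, \<tau>, \<xi>)"
  define U where "U = {w::pt. admissible H w}"
  have oU: "open U" unfolding U_def by (rule open_adm[OF h])
  have zU: "?z \<in> U" unfolding U_def using adm by simp
  have gU: "goodpt rho pr H gam w" if "w \<in> U" for w using goodpt_adm[OF rpos cpos] that unfolding U_def by simp
  have g: "goodpt rho pr H gam ?z" using gU zU .
  have dP: "ppi rho pr H gam k differentiable (at ?z)" if "k \<in> {1,2,3}" for k
    using ppi_qq_differentiable(1)[OF r p h g that] .
  have dq: "qq rho pr H gam k differentiable (at ?z)" if "k \<in> {1,2,3}" for k
    using ppi_qq_differentiable(2)[OF r p h g that] .
  show "frechet_derivative (ppi rho pr H gam k) (at ?z) hh ** ppi rho pr H gam l ?z
      + ppi rho pr H gam k ?z ** frechet_derivative (ppi rho pr H gam l) (at ?z) hh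
      = (if k = l then frechet_derivative (ppi rho pr H gam l) (at ?z) hh else 0)"
    if k: "k \<in> {1,2,3}" and l: "l \<in> {1,2,3}" for k l
  proof -
    have e: "frechet_derivative (\<lambda>w. ppi rho pr H gam k w ** ppi rho pr H gam l w) (at ?z)
        = frechet_derivative (if k = l then ppi rho pr H gam l else (\<lambda>w. 0)) (at ?z)"
      apply (rule deriv_local_eq[OF oU zU])
      using proj_mult[OF gU k l] apply simp
      using dP[OF k] dP[OF l] apply (rule differentiable_mmult)
      using dP[OF l] by simp
    have "frechet_derivative (\<lambda>w. ppi rho pr H gam k w ** ppi rho pr H gam l w) (at ?z) hh
       = ppi rho pr H gam k ?z ** frechet_derivative (ppi rho pr H gam l) (at ?z) hh
         + frechet_derivative (ppi rho pr H gam k) (at ?z) hh ** ppi rho pr H gam l ?z"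
      unfolding fd_mmult[OF dP[OF k] dP[OF l]] ..
    then show ?thesis unfolding e by (cases "k = l") (simp_all add: fd_zero add.commute)
  qed
  show "transpose (frechet_derivative (ppi rho pr H gam k) (at ?z) hh) = frechet_derivative (ppi rho pr H gam k) (at ?z) hh"
    if k: "k \<in> {1,2,3}" for k
  proof -
    have e: "frechet_derivative (\<lambda>w. transpose (ppi rho pr H gam k w)) (at ?z) = frechet_derivative (ppi rho pr H gam k) (at ?z)"
      apply (rule deriv_local_eq[OF oU zU])
      using proj_sym[OF gU k] apply simp
      using dP[OF k] apply (rule differentiable_linear_comp[OF bounded_linear_transpose])
      using dP[OF k] by simp
    show ?thesis using fun_cong[OF e, of hh] unfolding fd_transpose[OF dP[OF k]] by simp
  qed
  show "frechet_derivative (p2 rho pr H gam) (at ?z) hh =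
       (\<Sum>l\<in>{1,2,3}. frechet_derivative (qq rho pr H gam l) (at ?z) hh *\<^sub>R ppi rho pr H gam l ?z
          + qq rho pr H gam l ?z *\<^sub>R frechet_derivative (ppi rho pr H gam l) (at ?z) hh)"
  proof -
    have d2: "p2 rho pr H gam differentiable (at ?z)"
    proof -
      obtain Dr Dp DH where "(rho has_derivative Dr) (at x)" "(pr has_derivative Dp) (at x)" "(H has_derivative DH) (at x)"
        using r p h unfolding differentiable_def by blast
      from p2_has_derivative[OF this] show ?thesis unfolding differentiable_def by blast
    qed
    have dt: "(\<lambda>w. qq rho pr H gam k w *\<^sub>R ppi rho pr H gam k w) differentiable (at ?z)" if "k \<in> {1,2,3}" for k
      using dq[OF that] dP[OF that] by (rule differentiable_scaleR)
    have e: "frechet_derivative (p2 rho pr H gam) (at ?z) = frechet_derivative (\<lambda>w. (qq rho pr H gam 1 w *\<^sub>R ppi rho pr H gam 1 w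
        + qq rho pr H gam 2 w *\<^sub>R ppi rho pr H gam 2 w) + qq rho pr H gam 3 w *\<^sub>R ppi rho pr H gam 3 w) (at ?z)"
      apply (rule deriv_local_eq[OF oU zU])
      using p2_decomp[OF gU] apply simp
      apply (rule d2)
      using dt[of 1] dt[of 2] dt[of 3] by (intro differentiable_add) auto
    show ?thesis unfolding e
      using dt[of 1] dt[of 2] dt[of 3]
      by (simp add: fd_add differentiable_add fd_scaleR dq dP add.commute add.left_commute)
  qed
qed


lemma ptil_deriv:
  fixes rho pr :: "real^3 \<Rightarrow> real" and H :: "real^3 \<Rightarrow> real^3"
  assumes dP: "\<And>k. k \<in> {1,2,3} \<Longrightarrow> ppi rho pr H gam k differentiable (at z)"
    and dq: "\<And>k. k \<in> {1,2,3} \<Longrightarrow> qq rho pr H gam k differentiable (at z)"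
    and j: "j \<in> {1,2,3}" and qj: "qq rho pr H gam j z = 0"
    and qk: "\<And>k. k \<in> {1,2,3} - {j} \<Longrightarrow> qq rho pr H gam k z \<noteq> 0"
  shows "ptil rho pr H gam j differentiable (at z)"
    "frechet_derivative (ptil rho pr H gam j) (at z) hh =
       frechet_derivative (ppi rho pr H gam j) (at z) hh
       + (\<Sum>k\<in>{1,2,3} - {j}. (frechet_derivative (qq rho pr H gam j) (at z) hh / qq rho pr H gam k z) *\<^sub>R ppi rho pr H gam k z)"
proof -
  let ?DP = "\<lambda>k. frechet_derivative (ppi rho pr H gam k) (at z)"
  let ?Dq = "\<lambda>k. frechet_derivative (qq rho pr H gam k) (at z)"
  have hP: "(ppi rho pr H gam k has_derivative ?DP k) (at z)" if "k \<in> {1,2,3}" for k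
    using dP[OF that] frechet_derivative_works by blast
  have hq: "(qq rho pr H gam k has_derivative ?Dq k) (at z)" if "k \<in> {1,2,3}" for k
    using dq[OF that] frechet_derivative_works by blast
  have pe: "ptil rho pr H gam j = (\<lambda>w. ppi rho pr H gam j w
     + (\<Sum>k\<in>{1,2,3} - {j}. (qq rho pr H gam j w / qq rho pr H gam k w) *\<^sub>R ppi rho pr H gam k w))"
    unfolding ptil_def ..
  have hd: "(ptil rho pr H gam j has_derivative (\<lambda>hh. ?DP j hh
       + (\<Sum>k\<in>{1,2,3} - {j}. (?Dq j hh / qq rho pr H gam k z) *\<^sub>R ppi rho pr H gam k z))) (at z)"
    unfolding pe
  proof (rule has_derivative_add[OF hP[OF j]], rule has_derivative_sum)
    fix k assume k: "k \<in> {1,2,3} - {j}"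
    have k3: "k \<in> {1,2,3}" using k by auto
    have "((\<lambda>w. (qq rho pr H gam j w / qq rho pr H gam k w) *\<^sub>R ppi rho pr H gam k w) has_derivative
      (\<lambda>h. (qq rho pr H gam j z / qq rho pr H gam k z) *\<^sub>R ?DP k h +
        ((?Dq j h * qq rho pr H gam k z - qq rho pr H gam j z * ?Dq k h) / (qq rho pr H gam k z * qq rho pr H gam k z)) *\<^sub>R ppi rho pr H gam k z)) (at z)"
      by (rule has_derivative_scaleR[OF has_derivative_divide'[OF hq[OF j] hq[OF k3] qk[OF k]] hP[OF k3]])
    then show "((\<lambda>w. (qq rho pr H gam j w / qq rho pr H gam k w) *\<^sub>R ppi rho pr H gam k w) has_derivative
      (\<lambda>h. (?Dq j h / qq rho pr H gam k z) *\<^sub>R ppi rho pr H gam k z)) (at z)"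
      using qk[OF k] unfolding qj by simp
  qed
  show "ptil rho pr H gam j differentiable (at z)" using hd unfolding differentiable_def by blast
  show "frechet_derivative (ptil rho pr H gam j) (at z) hh = ?DP j hh
       + (\<Sum>k\<in>{1,2,3} - {j}. (?Dq j hh / qq rho pr H gam k z) *\<^sub>R ppi rho pr H gam k z)"
  proof -
    have "(\<lambda>hh. ?DP j hh + (\<Sum>k\<in>{1,2,3} - {j}. (?Dq j hh / qq rho pr H gam k z) *\<^sub>R ppi rho pr H gam k z))
       = frechet_derivative (ptil rho pr H gam j) (at z)" by (rule frechet_derivative_at[OF hd])
    from fun_cong[OF this, of hh] show ?thesis by simp
  qed
qed


lemma cmat_mult: "cmat (A ** B) = cmat A ** cmat B"
  by (simp add: cmat_def matrix_matrix_mult_def vec_eq_iff)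
lemma cmat_add: "cmat (A + B) = cmat A + cmat B"
  by (simp add: cmat_def vec_eq_iff)
lemma cmat_diff: "cmat (A - B) = cmat A - cmat B"
  by (simp add: cmat_def vec_eq_iff)
lemma cmat_neg: "cmat (- A) = - cmat A"
  by (simp add: cmat_def vec_eq_iff)
lemma cmat_scaleR: "cmat (c *\<^sub>R A) = c *\<^sub>R cmat A"
  unfolding cmat_def vec_eq_iff by (simp add: vector_scaleR_component del: scaleR_conv_of_real) (simp add: scaleR_conv_of_real)
lemma cmat_mat1: "cmat (mat 1) = mat 1"
  by (simp add: cmat_def mat_def vec_eq_iff)
lemma cmat_zero: "cmat 0 = 0"
  by (simp add: cmat_def vec_eq_iff)

lemma tvm: "(transpose X *v u) \<bullet> (u::real^3) = u \<bullet> (X *v u)"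
  by (simp add: inner_vec_def matrix_vector_mult_def transpose_def sum_3 algebra_simps)

lemma negX: "transpose X = - X \<Longrightarrow> transpose X *v u = - (X *v (u::real^3))"
  by (simp add: matrix_vector_mult_def vec_eq_iff sum_negf)

lemma u_X_u:
  fixes X :: "real^3^3"
  assumes "transpose X = - X"
  shows "(transpose X *v u) \<bullet> u = 0"
proof -
  have e1: "(transpose X *v u) \<bullet> u = (X *v u) \<bullet> u" unfolding tvm by (simp add: inner_commute)
  have "(transpose X *v u) \<bullet> u = - ((X *v u) \<bullet> u)" unfolding negX[OF assms] by simp
  with e1 show ?thesis by simp
qed

lemma tens_mult_left: "tens a b ** M = tens a (transpose M *v b)"
  unfolding tens_def matrix_matrix_mult_def matrix_vector_mult_def transpose_def
  by (simp add: vec_eq_iff sum_3 algebra_simps)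


lemma rank1_real:
  fixes X :: "real^3^3"
  assumes "transpose X = - X"
  shows "((c::real) *\<^sub>R tens u u) ** X ** (c *\<^sub>R tens u u) = 0"
proof -
  have "tens u u ** X ** tens u u = tens u (transpose X *v u) ** tens u u" by (simp only: tens_mult_left)
  also have "\<dots> = ((transpose X *v u) \<bullet> u) *\<^sub>R tens u u" by (rule tens_mult)
  finally have "tens u u ** X ** tens u u = 0" unfolding u_X_u[OF assms] by simp
  then show ?thesis by (simp add: mat_scaleR_right scalar_matrix_assoc[symmetric])
qed

lemma dT_indep:
  fixes F :: "pt \<Rightarrow> 'b::real_normed_vector"
  assumes "\<And>s. F (s, x, \<tau>, \<xi>) = F (t, x, \<tau>, \<xi>)"
  shows "dT F (t, x, \<tau>, \<xi>) = 0"
proof -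
  have "(\<lambda>s::real. F ((t, x, \<tau>, \<xi>) + s *\<^sub>R (1, 0, 0, 0))) = (\<lambda>s. F (t, x, \<tau>, \<xi>))"
  proof
    fix s :: real
    have "(t, x, \<tau>, \<xi>) + s *\<^sub>R (1, 0, 0, 0) = (t + s, x, \<tau>, \<xi>)" by simp
    then show "F ((t, x, \<tau>, \<xi>) + s *\<^sub>R (1, 0, 0, 0)) = F (t, x, \<tau>, \<xi>)" using assms by simp
  qed
  then show ?thesis unfolding dT_def dir_deriv_def by simp
qed

lemma mat_scaleR_right_gen: "(M::'a::real_algebra_1^'n^'m) ** (c *\<^sub>R N) = c *\<^sub>R (M ** N)"
  by (simp add: matrix_scalar_ac scalar_matrix_assoc)

lemma rank1_cplx:
  fixes C :: "complex^3^3"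
  assumes as: "\<And>i k. C $ i $ k + C $ k $ i = 0"
  shows "cmat ((c::real) *\<^sub>R tens u u) ** C ** cmat (c *\<^sub>R tens u u) = 0"
proof -
  have d: "C $ i $ i = 0" for i using as[of i i] by simp
  have o: "C $ k $ i = - C $ i $ k" for i k using as[of i k] by (simp add: eq_neg_iff_add_eq_0 add.commute)
  have s: "(\<Sum>m\<in>UNIV. \<Sum>l\<in>UNIV. complex_of_real (u $ l) * C $ l $ m * complex_of_real (u $ m)) = 0"
    unfolding sum_3 d o[of 1 2] o[of 1 3] o[of 2 3] by (simp add: algebra_simps)
  have e: "(cmat (tens u u) ** C ** cmat (tens u u)) $ i $ k =
     complex_of_real (u $ i) * complex_of_real (u $ k) * (\<Sum>m\<in>UNIV. \<Sum>l\<in>UNIV. complex_of_real (u $ l) * C $ l $ m * complex_of_real (u $ m))" for i k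
    unfolding cmat_def tens_def matrix_matrix_mult_def
    by (simp add: sum_distrib_left sum_distrib_right mult_ac)
  have "cmat (tens u u) ** C ** cmat (tens u u) = 0"
    unfolding vec_eq_iff using e s by simp
  then show ?thesis unfolding cmat_scaleR 
    by (simp add: mat_scaleR_right_gen scalar_matrix_assoc[symmetric])
qed





lemma sum_jab:
  assumes s: "{j, a, b} = {1, 2, 3::nat}" and ja: "j \<noteq> a" and jb: "j \<noteq> b" and ab: "a \<noteq> b"
  shows "(\<Sum>k\<in>{1,2,3}. f k) = f j + f a + f b" "{1,2,3} - {j} = {a, b}"
proof -
  have "(\<Sum>k\<in>{1,2,3}. f k) = (\<Sum>k\<in>{j,a,b}. f k)" unfolding s ..
  also have "\<dots> = f j + f a + f b" using ja jb ab by (simp add: add.assoc)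
  finally show "(\<Sum>k\<in>{1,2,3}. f k) = f j + f a + f b" .
  show "{1,2,3} - {j} = {a, b}" using s ja jb ab by auto
qed

lemma main_poisson:
  fixes rho pr :: "real^3 \<Rightarrow> real" and H :: "real^3 \<Rightarrow> real^3"
  assumes r: "\<And>x. rho differentiable (at x)" and p: "\<And>x. pr differentiable (at x)" and h: "\<And>x. H differentiable (at x)"
    and rpos: "\<forall>x. rho x > 0" and cpos: "\<forall>x. csq rho pr gam x > 0" and adm: "admissible H (t, x, \<tau>, \<xi>)"
    and s: "{j, a, b} = {1, 2, 3::nat}" and ja: "j \<noteq> a" and jb: "j \<noteq> b" and ab: "a \<noteq> b"
    and qj: "qq rho pr H gam j (t, x, \<tau>, \<xi>) = 0" and qa: "qq rho pr H gam a (t, x, \<tau>, \<xi>) \<noteq> 0"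
    and qb: "qq rho pr H gam b (t, x, \<tau>, \<xi>) \<noteq> 0"
  shows "((1/2) *\<^sub>R poisson (ptil rho pr H gam j) (p2 rho pr H gam) (t, x, \<tau>, \<xi>)) ** ppi rho pr H gam j (t, x, \<tau>, \<xi>)
     = - (hamil (qq rho pr H gam j) (ppi rho pr H gam j) (t, x, \<tau>, \<xi>) ** ppi rho pr H gam j (t, x, \<tau>, \<xi>))"
proof -
  let ?z = "(t, x, \<tau>, \<xi>)"
  let ?P = "\<lambda>k. ppi rho pr H gam k ?z" and ?q = "\<lambda>k. qq rho pr H gam k ?z"
  let ?DP = "\<lambda>k. frechet_derivative (ppi rho pr H gam k) (at ?z)"
  let ?Dq = "\<lambda>k. frechet_derivative (qq rho pr H gam k) (at ?z)"
  let ?Dp2 = "frechet_derivative (p2 rho pr H gam) (at ?z)"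
  let ?Dpt = "frechet_derivative (ptil rho pr H gam j) (at ?z)"
  have j3: "j \<in> {1,2,3}" and a3: "a \<in> {1,2,3}" and b3: "b \<in> {1,2,3}" using s by auto
  have g: "goodpt rho pr H gam ?z" using goodpt_adm[OF rpos cpos adm] .
  have dP: "ppi rho pr H gam k differentiable (at ?z)" if "k \<in> {1,2,3}" for k
    using ppi_qq_differentiable(1)[OF r p h g that] .
  have dq: "qq rho pr H gam k differentiable (at ?z)" if "k \<in> {1,2,3}" for k
    using ppi_qq_differentiable(2)[OF r p h g that] .
  have d2: "p2 rho pr H gam differentiable (at ?z)"
  proof -
    obtain Dr Dp DH where "(rho has_derivative Dr) (at x)" "(pr has_derivative Dp) (at x)" "(H has_derivative DH) (at x)"
      using r p h unfolding differentiable_def by blast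
    from p2_has_derivative[OF this] show ?thesis unfolding differentiable_def by blast
  qed
  note SJ = sum_jab[OF s ja jb ab]
  have qk: "?q k \<noteq> 0" if "k \<in> {1,2,3} - {j}" for k using that qa qb unfolding SJ(2) by auto
  note PT = ptil_deriv[OF dP dq j3 qj qk]
  note DF = deriv_facts[OF r p h rpos cpos adm]
  have tP: "dT (ppi rho pr H gam j) ?z = 0" by (rule dT_indep) (simp add: ppi_def)
  have tq: "dT (qq rho pr H gam j) ?z = 0" by (rule dT_indep) (simp add: qq_def)
  have t2: "dT (p2 rho pr H gam) ?z = 0" by (rule dT_indep) (simp add: p2_def)
  have tpt: "dT (ptil rho pr H gam j) ?z = 0" by (rule dT_indep) (simp add: ptil_def ppi_def qq_def)
  have pair: "(?Dpt hf ** ?Dp2 he - ?Dpt he ** ?Dp2 hf) ** ?P j = 2 *\<^sub>R ((?Dq j he *\<^sub>R ?DP j hf - ?Dq j hf *\<^sub>R ?DP j he) ** ?P j)"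
    for he hf
  proof (rule poisson_pair_alg)
    show "?P j ** ?P j = ?P j" using proj_mult[OF g j3 j3] by simp
    show "?P a ** ?P a = ?P a" using proj_mult[OF g a3 a3] by simp
    show "?P b ** ?P b = ?P b" using proj_mult[OF g b3 b3] by simp
    show "?P j ** ?P a = 0" using proj_mult[OF g j3 a3] ja by simp
    show "?P a ** ?P j = 0" using proj_mult[OF g a3 j3] ja by simp
    show "?P j ** ?P b = 0" using proj_mult[OF g j3 b3] jb by simp
    show "?P b ** ?P j = 0" using proj_mult[OF g b3 j3] jb by simp
    show "?P a ** ?P b = 0" using proj_mult[OF g a3 b3] ab by simp
    show "?P b ** ?P a = 0" using proj_mult[OF g b3 a3] ab by simp
    show "?P j + ?P a + ?P b = mat 1" using pointwise_orth_sum(4)[OF g] SJ(1)[of ?P] by (simp add: add.assoc)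
    show "?q a \<noteq> 0" "?q b \<noteq> 0" using qa qb .
    show "?DP j he ** ?P j + ?P j ** ?DP j he = ?DP j he" using DF(1)[OF j3 j3] by simp
    show "?DP a he ** ?P j + ?P a ** ?DP j he = 0" using DF(1)[OF a3 j3] ja by simp
    show "?DP b he ** ?P j + ?P b ** ?DP j he = 0" using DF(1)[OF b3 j3] jb by simp
    show "?DP j he ** ?P a + ?P j ** ?DP a he = 0" using DF(1)[OF j3 a3] ja by simp
    show "?DP j he ** ?P b + ?P j ** ?DP b he = 0" using DF(1)[OF j3 b3] jb by simp
    show "?DP j hf ** ?P j + ?P j ** ?DP j hf = ?DP j hf" using DF(1)[OF j3 j3] by simp
    show "?DP a hf ** ?P j + ?P a ** ?DP j hf = 0" using DF(1)[OF a3 j3] ja by simp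
    show "?DP b hf ** ?P j + ?P b ** ?DP j hf = 0" using DF(1)[OF b3 j3] jb by simp
    show "?DP j hf ** ?P a + ?P j ** ?DP a hf = 0" using DF(1)[OF j3 a3] ja by simp
    show "?DP j hf ** ?P b + ?P j ** ?DP b hf = 0" using DF(1)[OF j3 b3] jb by simp
    show "?Dp2 he = ?Dq j he *\<^sub>R ?P j + ?Dq a he *\<^sub>R ?P a + ?Dq b he *\<^sub>R ?P b + ?q a *\<^sub>R ?DP a he + ?q b *\<^sub>R ?DP b he"
      unfolding DF(3) SJ(1) qj by (simp add: algebra_simps)
    show "?Dp2 hf = ?Dq j hf *\<^sub>R ?P j + ?Dq a hf *\<^sub>R ?P a + ?Dq b hf *\<^sub>R ?P b + ?q a *\<^sub>R ?DP a hf + ?q b *\<^sub>R ?DP b hf"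
      unfolding DF(3) SJ(1) qj by (simp add: algebra_simps)
    show "?Dpt he = ?DP j he + (?Dq j he / ?q a) *\<^sub>R ?P a + (?Dq j he / ?q b) *\<^sub>R ?P b"
      using PT(2)[of he] ab unfolding SJ(2) by (simp add: add.assoc)
    show "?Dpt hf = ?DP j hf + (?Dq j hf / ?q a) *\<^sub>R ?P a + (?Dq j hf / ?q b) *\<^sub>R ?P b"
      using PT(2)[of hf] ab unfolding SJ(2) by (simp add: add.assoc)
    show "transpose (?DP j he) = ?DP j he" using DF(2)[OF j3] .
    show "transpose (?DP j hf) = ?DP j hf" using DF(2)[OF j3] .
    show "transpose (?P a) = ?P a" using proj_sym[OF g a3] .
    show "transpose (?P b) = ?P b" using proj_sym[OF g b3] .
    show "?P j ** X ** ?P j = 0" if "transpose X = - X" for X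
      unfolding pointwise_U(1)[OF g j3] by (rule rank1_real[OF that])
  qed
  have ddX: "dX F i ?z = frechet_derivative F (at ?z) (0, axis i 1, 0, 0)" if "F differentiable (at ?z)" for F :: "pt \<Rightarrow> real^3^3" and i
    unfolding dX_def by (rule dd_frechet[OF that])
  have ddXi: "dXi F i ?z = frechet_derivative F (at ?z) (0, 0, 0, axis i 1)" if "F differentiable (at ?z)" for F :: "pt \<Rightarrow> real^3^3" and i
    unfolding dXi_def by (rule dd_frechet[OF that])
  have ddXs: "dX F i ?z = frechet_derivative F (at ?z) (0, axis i 1, 0, 0)" if "F differentiable (at ?z)" for F :: "pt \<Rightarrow> real" and i
    unfolding dX_def by (rule dd_frechet[OF that])
  have ddXis: "dXi F i ?z = frechet_derivative F (at ?z) (0, 0, 0, axis i 1)" if "F differentiable (at ?z)" for F :: "pt \<Rightarrow> real" and i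
    unfolding dXi_def by (rule dd_frechet[OF that])
  define A where "A = (\<lambda>i::3. (?Dpt (0, 0, 0, axis i 1) ** ?Dp2 (0, axis i 1, 0, 0) - ?Dpt (0, axis i 1, 0, 0) ** ?Dp2 (0, 0, 0, axis i 1)))"
  define B where "B = (\<lambda>i::3. ?Dq j (0, 0, 0, axis i 1) *\<^sub>R ?DP j (0, axis i 1, 0, 0) - ?Dq j (0, axis i 1, 0, 0) *\<^sub>R ?DP j (0, 0, 0, axis i 1))"
  have xpt: "dX (ptil rho pr H gam j) i ?z = ?Dpt (0, axis i 1, 0, 0)" for i
    by (rule ddX[OF PT(1)])
  have xipt: "dXi (ptil rho pr H gam j) i ?z = ?Dpt (0, 0, 0, axis i 1)" for i
    by (rule ddXi[OF PT(1)])
  have pe: "poisson (ptil rho pr H gam j) (p2 rho pr H gam) ?z = A 1 + A 2 + A 3"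
    unfolding poisson_def tpt t2 A_def sum_3 xpt xipt ddX[OF d2] ddXi[OF d2] by simp
  have he: "hamil (qq rho pr H gam j) (ppi rho pr H gam j) ?z = B 1 + B 2 + B 3"
    unfolding hamil_def tP tq B_def sum_3 ddX[OF dP[OF j3]] ddXi[OF dP[OF j3]] ddXs[OF dq[OF j3]] ddXis[OF dq[OF j3]] by simp
  have AB: "A i ** ?P j = - (2 *\<^sub>R (B i ** ?P j))" for i
    unfolding A_def B_def pair by (simp add: mat_diff_rdistrib algebra_simps)
  show ?thesis unfolding pe he
    by (simp add: mat_add_rdistrib AB scalar_matrix_assoc[symmetric] algebra_simps)
qed


lemma neg_mv: "(- (A::complex^3^3)) *v v = - (A *v v)"
  by (simp add: matrix_vector_mult_def vec_eq_iff sum_negf)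

lemma smult_mv: "((c::real) *\<^sub>R (A::complex^3^3)) *v v = c *\<^sub>R (A *v v)"
  unfolding vec_eq_iff matrix_vector_mult_def
  by (simp add: vector_scaleR_component scaleR_sum_right del: scaleR_conv_of_real)

theorem proposition5p6:
  fixes rho pr :: "real^3 \<Rightarrow> real" and H :: "real^3 \<Rightarrow> real^3" and gam :: real
    and p1 p0 :: "pt \<Rightarrow> complex^3^3"
    and Gam :: "nat \<Rightarrow> pt set"
    and Lam :: "pt set" and a La :: "pt \<Rightarrow> complex^3"
  assumes smooth: "smooth_on UNIV rho" "smooth_on UNIV pr" "smooth_on UNIV H"
    and rho_pos: "\<forall>x. rho x > 0"
    and c_pos: "\<forall>x. csq rho pr gam x > 0"
    and H_cond: "\<forall>x. 0 < (norm (H x))\<^sup>2 \<and> (norm (H x))\<^sup>2 \<noteq> rho x * csq rho pr gam x"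
    and equilibrium: "\<forall>x. grad3 pr x + cross3 (H x) (curl3 H x) = 0"
    and symbol: "\<forall>z. full_symbol rho pr H gam z = cmat (p2 rho pr H gam z) + p1 z + p0 z"
    and homog: "\<forall>t x \<tau> \<xi> s. s > 0 \<longrightarrow>
        p1 (t, x, s * \<tau>, s *\<^sub>R \<xi>) = s *\<^sub>R p1 (t, x, \<tau>, \<xi>) \<and>
        p0 (t, x, s * \<tau>, s *\<^sub>R \<xi>) = p0 (t, x, \<tau>, \<xi>)"
    and Gam_open: "\<forall>j\<in>{1,2,3}. open (Gam j) \<and> conic_set (Gam j)"
    and Gam_nbhd: "\<forall>j\<in>{1,2,3}. {z. admissible H z \<and> qq rho pr H gam j z = 0} \<subseteq> Gam j"
    and Gam_disj: "\<forall>j\<in>{1,2,3}. \<forall>k\<in>{1,2,3}. j \<noteq> k \<longrightarrow> Gam j \<inter> Gam k = {}"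
    and Lam_lag: "lagrangian_submanifold Lam" and Lam_conic: "conic_set Lam"
    and Lam_char: "Lam \<subseteq> CharP rho pr H gam"
    and Lam_adm: "\<forall>z\<in>Lam. admissible H z"
    and kernel: "\<forall>z\<in>Lam. cmat (p2 rho pr H gam z) *v a z = 0"
  shows "\<forall>j\<in>{1,2,3}. \<forall>z\<in>Lam \<inter> Gam j.
           transportT rho pr H gam p1 j La a z
             = La z - cmat (hamil (qq rho pr H gam j) (ppi rho pr H gam j) z) *v a z"
proof (intro ballI)
  fix j z assume j: "j \<in> {1,2,3::nat}" and zG: "z \<in> Lam \<inter> Gam j"
  obtain t x \<tau> \<xi> where z: "z = (t, x, \<tau>, \<xi>)" by (cases z) auto
  have sm: "iter_dd vs f differentiable (at y)" if "smooth_on UNIV f" "set vs \<subseteq> Basis" for f :: "real^3 \<Rightarrow> 'b::real_normed_vector" and vs y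
    using that unfolding smooth_on_def by blast
  have r: "\<And>y. rho differentiable (at y)" using sm[OF smooth(1), of "[]"] by simp
  have p: "\<And>y. pr differentiable (at y)" using sm[OF smooth(2), of "[]"] by simp
  have h: "\<And>y. H differentiable (at y)" using sm[OF smooth(3), of "[]"] by simp
  have it: "iter_dd [axis m 1] f = pd3 f m" for f :: "real^3 \<Rightarrow> 'b::real_normed_vector" and m
    by (simp add: pd3_def fun_eq_iff)
  have hH2: "\<And>m. pd3 H m differentiable (at x)" using sm[OF smooth(3), of "[axis _ 1]"] unfolding it by simp
  have hp2: "\<And>m. pd3 pr m differentiable (at x)" using sm[OF smooth(2), of "[axis _ 1]"] unfolding it by simp
  let ?z = "(t, x, \<tau>, \<xi>)"
  have zL: "?z \<in> Lam" and zGj: "?z \<in> Gam j" using zG z by auto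
  have adm: "admissible H ?z" using Lam_adm zL by blast
  have g: "goodpt rho pr H gam ?z" using goodpt_adm[OF rho_pos c_pos adm] .
  have only: "k = j" if k: "k \<in> {1,2,3}" and q0: "qq rho pr H gam k ?z = 0" for k
  proof (rule ccontr)
    assume "k \<noteq> j"
    have "?z \<in> Gam k" using Gam_nbhd k adm q0 by blast
    then show False using Gam_disj k j \<open>k \<noteq> j\<close> zGj by blast
  qed
  have "qq rho pr H gam 1 ?z * qq rho pr H gam 2 ?z * qq rho pr H gam 3 ?z = 0"
    using Lam_char zL unfolding CharP_def by blast
  then have "\<exists>k\<in>{1,2,3::nat}. qq rho pr H gam k ?z = 0" by auto
  then have qj: "qq rho pr H gam j ?z = 0" using only by blast
  have qk: "qq rho pr H gam k ?z \<noteq> 0" if "k \<in> {1,2,3} - {j}" for k using only that by blast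
  obtain ka kb where s: "{j, ka, kb} = {1, 2, 3::nat}" and ja: "j \<noteq> ka" and jb: "j \<noteq> kb" and ab: "ka \<noteq> kb"
  proof -
    consider "j = 1" | "j = 2" | "j = 3" using j by auto
    then show thesis
    proof cases
      case 1 then show thesis using that[of 2 3] by auto
    next
      case 2 then show thesis using that[of 1 3] by auto
    next
      case 3 then show thesis using that[of 1 2] by auto
    qed
  qed
  note SJ = sum_jab[OF s ja jb ab]
  have a3: "ka \<in> {1,2,3}" and b3: "kb \<in> {1,2,3}" using s by auto
  have qa: "qq rho pr H gam ka ?z \<noteq> 0" using qk a3 ja by auto
  have qb: "qq rho pr H gam kb ?z \<noteq> 0" using qk b3 jb by auto
  let ?P = "\<lambda>k. ppi rho pr H gam k ?z" and ?q = "\<lambda>k. qq rho pr H gam k ?z"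
  let ?a = "a ?z"
  have p2z: "p2 rho pr H gam ?z = ?q ka *\<^sub>R ?P ka + ?q kb *\<^sub>R ?P kb"
    using p2_decomp[OF g] SJ(1)[of "\<lambda>k. ?q k *\<^sub>R ?P k"] qj by (simp add: add.assoc)
  have ker: "cmat (p2 rho pr H gam ?z) *v ?a = 0" using kernel zL by blast
  have Pk0: "cmat (?P k) *v ?a = 0" if k: "k \<in> {ka, kb}" and qk0: "?q k \<noteq> 0" for k
  proof -
    have k3: "k \<in> {1,2,3}" using k a3 b3 by auto
    have "?P k ** p2 rho pr H gam ?z = ?q k *\<^sub>R ?P k"
      unfolding p2z using k ab proj_mult[OF g k3 a3] proj_mult[OF g k3 b3]
      by (auto simp: matrix_add_ldistrib mat_scaleR_right)
    then have "cmat (?P k) *v (cmat (p2 rho pr H gam ?z) *v ?a) = ?q k *\<^sub>R (cmat (?P k) *v ?a)"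
      by (simp add: matrix_vector_mul_assoc cmat_mult[symmetric] cmat_scaleR smult_mv)
    then have "?q k *\<^sub>R (cmat (?P k) *v ?a) = cmat (?P k) *v (cmat (p2 rho pr H gam ?z) *v ?a)" by simp
    also have "\<dots> = 0" unfolding ker by simp
    finally show ?thesis using qk0 by simp
  qed
  have aP: "cmat (?P j) *v ?a = ?a"
  proof -
    have e: "?P j + ?P ka + ?P kb = mat 1" using pointwise_orth_sum(4)[OF g] SJ(1)[of ?P] by (simp add: add.assoc)
    have "?a = cmat (?P j + ?P ka + ?P kb) *v ?a" unfolding e cmat_mat1 by simp
    also have "\<dots> = cmat (?P j) *v ?a" using Pk0[of ka] Pk0[of kb] qa qb
      by (simp add: cmat_add matrix_vector_mult_add_rdistrib)
    finally show ?thesis by simp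
  qed
  have MP: "((1/2) *\<^sub>R poisson (ptil rho pr H gam j) (p2 rho pr H gam) ?z) ** ?P j
     = - (hamil (qq rho pr H gam j) (ppi rho pr H gam j) ?z ** ?P j)"
    by (rule main_poisson[OF r p h rho_pos c_pos adm s ja jb ab qj qa qb])
  have partA: "cmat ((1/2) *\<^sub>R poisson (ptil rho pr H gam j) (p2 rho pr H gam) ?z) *v ?a
      = - (cmat (hamil (qq rho pr H gam j) (ppi rho pr H gam j) ?z) *v ?a)"
  proof -
    have "cmat ((1/2) *\<^sub>R poisson (ptil rho pr H gam j) (p2 rho pr H gam) ?z) *v ?a
       = cmat ((1/2) *\<^sub>R poisson (ptil rho pr H gam j) (p2 rho pr H gam) ?z) *v (cmat (?P j) *v ?a)"
      using aP by simp
    also have "\<dots> = cmat (- (hamil (qq rho pr H gam j) (ppi rho pr H gam j) ?z ** ?P j)) *v ?a"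
      unfolding matrix_vector_mul_assoc cmat_mult[symmetric] MP ..
    also have "\<dots> = - (cmat (hamil (qq rho pr H gam j) (ppi rho pr H gam j) ?z) *v (cmat (?P j) *v ?a))"
      by (simp only: cmat_neg cmat_mult neg_mv matrix_vector_mul_assoc)
    finally show ?thesis using aP by simp
  qed
  have ptz: "ptil rho pr H gam j ?z = ?P j" unfolding ptil_def qj by simp
  have eq: "grad3 pr x + cross3 (H x) (curl3 H x) = 0" using equilibrium by blast
  have AS: "\<And>i k. subprincipal rho pr H gam p1 ?z $ i $ k + subprincipal rho pr H gam p1 ?z $ k $ i = 0"
    by (rule subp_antisym[OF r p h hH2 hp2 symbol homog eq])
  have j3: "j \<in> {1,2,3}" using j .
  have R0: "cmat (?P j) ** subprincipal rho pr H gam p1 ?z ** cmat (?P j) = 0"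
    unfolding pointwise_U(1)[OF g j3] by (rule rank1_cplx[OF AS])
  have partB: "(cmat (ptil rho pr H gam j ?z) ** subprincipal rho pr H gam p1 ?z) *v ?a = 0"
  proof -
    have "(cmat (ptil rho pr H gam j ?z) ** subprincipal rho pr H gam p1 ?z) *v ?a
       = (cmat (?P j) ** subprincipal rho pr H gam p1 ?z) *v (cmat (?P j) *v ?a)" unfolding ptz aP ..
    also have "\<dots> = 0" unfolding matrix_vector_mul_assoc R0 by simp
    finally show ?thesis .
  qed
  show "transportT rho pr H gam p1 j La a z = La z - cmat (hamil (qq rho pr H gam j) (ppi rho pr H gam j) z) *v a z"
    unfolding z transportT_def partA partB by simp
qed


end
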